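(* If there is a $P$-counting module with data order $K\le 1$, then there is a (non-deterministic, i.e. possibly using $\mathsf{choose}$) $(\lambda n.\,2^{P(n)-1})$-counting module with data order $1$.
   Context: Types are built from a finite set $\mathcal{S}$ of sorts (containing $\mathsf{bool}$ and $\mathsf{list}$) by $\sigma ::= \iota \mid \sigma \times \tau \mid \sigma \Rightarrow \tau$. Type order: $\mathrm{ord}(\iota)=0$ for sorts, $\mathrm{ord}(\sigma\times\tau)=\max(\mathrm{ord}(\sigma),\mathrm{ord}(\tau))$, $\mathrm{ord}(\sigma\Rightarrow\tau)=\max(\mathrm{ord}(\sigma)+1,\mathrm{ord}(\tau))$. Constructors include $\mathsf{true},\mathsf{false}:\mathsf{bool}$, $[]:\mathsf{list}$ and infix $::\ :\mathsf{bool}\Rightarrow\mathsf{list}\Rightarrow\mathsf{list}$; constructors take arguments of order-$0$ types and return a sort. Syntax. Patterns: $\ell ::= x \mid c\,\ell_1\cdots\ell_m$ ($c$ a constructor). Expressions: $s ::= x \mid c \mid f \mid \mathsf{if}\ s_1\ \mathsf{then}\ s_2\ \mathsf{else}\ s_3 \mid \mathsf{choose}\ s_1\cdots s_n \mid (s,t) \mid s\,t$ ($f$ a defined symbol). Clauses have the form $f\,\ell_1\cdots\ell_k = s$; each lhs variable occurs once, rhs variables occur in the lhs, both sides are simply typed with a common type under some type environment $\Gamma$ for the lhs variables, constructors are fully applied, and all clauses for $f$ have the same number $\mathrm{arity}(f)$ of arguments. Sub-expressions: $s \unrhd t$ iff $s = t$ or $s \rhd t$, where $(s_1,s_2)\rhd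 t$, $\mathsf{if}\ s_1\ \mathsf{then}\ s_2\ \mathsf{else}\ s_3 \rhd t$ and $\mathsf{choose}\ s_1\cdots s_n\rhd t$ hold if $s_i \unrhd t$ for some $i$, and $s_1\,s_2 \rhd t$ holds if $s_1 \rhd t$ or $s_2 \unrhd t$. A clause $f\,\ell_1\cdots\ell_k=s$ is cons-free if every $t$ with $s\unrhd t$ of the form $c\,s_1\cdots s_m$ with $c$ a constructor is a data expression or satisfies $\ell_i\unrhd t$ for some $i$. A list of clauses has data order $K$ if all clauses can be typed with environments assigning every variable a type of order $\le K$. Semantics. Data expressions $d ::= c\,d_1\cdots d_m \mid (d,d')$; values $v ::= d \mid (v,w) \mid f\,v_1\cdots v_n$ with $n<\mathrm{arity}(f)$. For a list of clauses $p$, judgements $p,\gamma\vdash s\to w$ and $p\vdash^{\mathrm{call}} f\,v_1\cdots v_n\to w$ are derived by: $p,\gamma\vdash x\to\gamma(x)$; $p,\gamma\vdash f\to w$ if $p\vdash^{\mathrm{call}} f\to w$; $p,\gamma\vdash c\,s_1\cdots s_m\to c\,b_1\cdots b_m$ if $p,\gamma\vdash s_i\to b_i$; $p,\gamma\vdash(s,t)\to(v,w)$ if $s\to v$, $t\to w$; $p,\gamma\vdash\mathsf{choose}\ s_1\cdots s_n\to w$ if $p,\gamma\vdash s_i\to w$ for some $i$; $p,\gamma\vdash\mathsf{if}\ s_1\ \mathsf{then}\ s_2\ \mathsf{else}\ s_3\to w$ if $s_1\to\mathsf{true}$ and $s_2\to w$, or $s_1\to\mathsf{false}$ and $s_3\to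 w$; $p,\gamma\vdash s\,t\to w$ if $s\to f\,v_1\cdots v_n$, $t\to v_{n+1}$ and $p\vdash^{\mathrm{call}} f\,v_1\cdots v_{n+1}\to w$; $p\vdash^{\mathrm{call}} f\,v_1\cdots v_n\to f\,v_1\cdots v_n$ if $n<\mathrm{arity}(f)$; $p\vdash^{\mathrm{call}} f\,v_1\cdots v_k\to w$ if $p,\gamma\vdash s\to w$ where $f\,\ell_1\cdots\ell_k=s$ is the first clause of $p$ with $v_i=\ell_i\gamma$ for all $i$ for some $\gamma$ on the lhs variables. Counting modules. For $P:\mathbb{N}\to\mathbb{N}\setminus\{0\}$, a $P$-counting module is a tuple $(\alpha_\pi,\mathcal{D}_\pi,\mathcal{A}_\pi,[\![\cdot]\!]_\pi,p_\pi)$ where: $\alpha_\pi$ is a type; $\mathcal{D}_\pi$ is a set of fresh defined symbols containing $\mathsf{seed}_\pi:\mathsf{list}\Rightarrow\alpha_\pi$, $\mathsf{pred}_\pi:\mathsf{list}\Rightarrow\alpha_\pi\Rightarrow\alpha_\pi$, $\mathsf{zero}_\pi:\mathsf{list}\Rightarrow\alpha_\pi\Rightarrow\mathsf{bool}$; for each $n\in\mathbb{N}$, $\mathcal{A}^n_\pi$ is a set of values of type $\alpha_\pi$ built over the constructors and $\mathcal{D}_\pi$ and $[\![\cdot]\!]^n_\pi:\mathcal{A}^n_\pi\to\mathbb{N}$ is total; and $p_\pi$ is a list of cons-free clauses on the symbols of $\mathcal{D}_\pi$ such that for every boolean list $cs$ of length $n$: there is a unique value $v$ with $p_\pi\vdash^{\mathrm{call}}\mathsf{seed}_\pi\,cs\to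 v$, and it satisfies $v\in\mathcal{A}^n_\pi$, $[\![v]\!]^n_\pi=P(n)-1$; if $v\in\mathcal{A}^n_\pi$ with $[\![v]\!]^n_\pi=i>0$, there is a unique $w$ with $p_\pi\vdash^{\mathrm{call}}\mathsf{pred}_\pi\,cs\,v\to w$, and $w\in\mathcal{A}^n_\pi$, $[\![w]\!]^n_\pi=i-1$; and for $v\in\mathcal{A}^n_\pi$ with $[\![v]\!]^n_\pi=i$, $p_\pi\vdash^{\mathrm{call}}\mathsf{zero}_\pi\,cs\,v\to\mathsf{true}$ iff $i=0$, and $p_\pi\vdash^{\mathrm{call}}\mathsf{zero}_\pi\,cs\,v\to\mathsf{false}$ iff $i>0$. The module has data order $K$ if $p_\pi$ has data order $K$. *)

theory Defs
  imports Main
begin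

datatype sort = SBool | SList | SOther string

datatype ty = TBase sort | TProd ty ty | TArr ty ty

fun ord :: "ty \<Rightarrow> nat" where
  "ord (TBase s) = 0"
| "ord (TProd a b) = max (ord a) (ord b)"
| "ord (TArr a b) = max (ord a + 1) (ord b)"

fun sorts_of :: "ty \<Rightarrow> sort set" where
  "sorts_of (TBase s) = {s}"
| "sorts_of (TProd a b) = sorts_of a \<union> sorts_of b"
| "sorts_of (TArr a b) = sorts_of a \<union> sorts_of b"

definition ty_over :: "sort set \<Rightarrow> ty \<Rightarrow> bool" where
  "ty_over S t \<longleftrightarrow> sorts_of t \<subseteq> S"

datatype cname = CTrue | CFalse | CNil | CCons | COther string

type_synonym csig = "string \<Rightarrow> (ty list \<times> sort) option"

fun csig_of :: "csig \<Rightarrow> cname \<Rightarrow> (ty list \<times> sort) option" where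
  "csig_of \<Sigma> CTrue = Some ([], SBool)"
| "csig_of \<Sigma> CFalse = Some ([], SBool)"
| "csig_of \<Sigma> CNil = Some ([], SList)"
| "csig_of \<Sigma> CCons = Some ([TBase SBool, TBase SList], SList)"
| "csig_of \<Sigma> (COther c) = \<Sigma> c"

definition wf_sig :: "sort set \<Rightarrow> csig \<Rightarrow> bool" where
  "wf_sig S \<Sigma> \<longleftrightarrow> finite S \<and> SBool \<in> S \<and> SList \<in> S \<and> finite (dom \<Sigma>) \<and>
     (\<forall>c tys s. \<Sigma> c = Some (tys, s) \<longrightarrow> s \<in> S \<and> (\<forall>t\<in>set tys. ty_over S t \<and> ord t = 0))"

datatype pat = PVar string | PCon cname "pat list"

text \<open>Since constructors are always fully applied, a constructor application
  \<open>c s1 ... sm\<close> is represented by a single node \<open>ConApp c [s1,...,sm]\<close>.\<close>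
datatype expr = Var string | ConApp cname "expr list" | Fun string
  | If expr expr expr | Choose "expr list" | Pair expr expr | App expr expr

type_synonym clause = "string \<times> pat list \<times> expr"

fun pat_expr :: "pat \<Rightarrow> expr" where
  "pat_expr (PVar x) = Var x"
| "pat_expr (PCon c ls) = ConApp c (map pat_expr ls)"

fun pvars :: "pat \<Rightarrow> string list" where
  "pvars (PVar x) = [x]"
| "pvars (PCon c ls) = concat (map pvars ls)"

fun fvars :: "expr \<Rightarrow> string set" where
  "fvars (Var x) = {x}"
| "fvars (ConApp c ss) = \<Union>(fvars ` set ss)"
| "fvars (Fun f) = {}"
| "fvars (If a b c) = fvars a \<union> fvars b \<union> fvars c"
| "fvars (Choose ss) = \<Union>(fvars ` set ss)"
| "fvars (Pair a b) = fvars a \<union> fvars b"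
| "fvars (App a b) = fvars a \<union> fvars b"

fun funs :: "expr \<Rightarrow> string set" where
  "funs (Var x) = {}"
| "funs (ConApp c ss) = \<Union>(funs ` set ss)"
| "funs (Fun f) = {f}"
| "funs (If a b c) = funs a \<union> funs b \<union> funs c"
| "funs (Choose ss) = \<Union>(funs ` set ss)"
| "funs (Pair a b) = funs a \<union> funs b"
| "funs (App a b) = funs a \<union> funs b"

text \<open>Strict sub-expressions (the relation \<open>\<rhd>\<close>); note that for an application
  \<open>s1 s2\<close> only strict sub-expressions of \<open>s1\<close> are included.\<close>
fun ssubs :: "expr \<Rightarrow> expr set" where
  "ssubs (Var x) = {}"
| "ssubs (Fun f) = {}"
| "ssubs (ConApp c ss) = (\<Union>s\<in>set ss. insert s (ssubs s))"
| "ssubs (If a b c) = insert a (ssubs a) \<union> insert b (ssubs b) \<union> insert c (ssubs c)"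
| "ssubs (Choose ss) = (\<Union>s\<in>set ss. insert s (ssubs s))"
| "ssubs (Pair a b) = insert a (ssubs a) \<union> insert b (ssubs b)"
| "ssubs (App a b) = ssubs a \<union> insert b (ssubs b)"

definition subexpr :: "expr \<Rightarrow> expr \<Rightarrow> bool" where
  "subexpr s t \<longleftrightarrow> t \<in> insert s (ssubs s)"

fun is_data_expr :: "expr \<Rightarrow> bool" where
  "is_data_expr (ConApp c ss) = (\<forall>s\<in>set ss. is_data_expr s)"
| "is_data_expr (Pair a b) = (is_data_expr a \<and> is_data_expr b)"
| "is_data_expr _ = False"

fun is_conapp :: "expr \<Rightarrow> bool" where
  "is_conapp (ConApp c ss) = True"
| "is_conapp _ = False"

definition cons_free :: "clause \<Rightarrow> bool" where
  "cons_free cl \<longleftrightarrow> (case cl of (f, ls, s) \<Rightarrow>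
     (\<forall>t. subexpr s t \<and> is_conapp t \<longrightarrow>
        is_data_expr t \<or> (\<exists>l\<in>set ls. subexpr (pat_expr l) t)))"

definition lhs_expr :: "string \<Rightarrow> pat list \<Rightarrow> expr" where
  "lhs_expr f ls = foldl App (Fun f) (map pat_expr ls)"

inductive typed :: "csig \<Rightarrow> (string \<Rightarrow> ty) \<Rightarrow> (string \<Rightarrow> ty) \<Rightarrow> expr \<Rightarrow> ty \<Rightarrow> bool"
  for \<Sigma> :: csig and FT :: "string \<Rightarrow> ty" and \<Gamma> :: "string \<Rightarrow> ty" where
  T_Var: "typed \<Sigma> FT \<Gamma> (Var x) (\<Gamma> x)"
| T_Fun: "typed \<Sigma> FT \<Gamma> (Fun f) (FT f)"
| T_Con: "csig_of \<Sigma> c = Some (tys, s) \<Longrightarrow> list_all2 (typed \<Sigma> FT \<Gamma>) ss tys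
          \<Longrightarrow> typed \<Sigma> FT \<Gamma> (ConApp c ss) (TBase s)"
| T_If: "typed \<Sigma> FT \<Gamma> a (TBase SBool) \<Longrightarrow> typed \<Sigma> FT \<Gamma> b t \<Longrightarrow> typed \<Sigma> FT \<Gamma> c t
          \<Longrightarrow> typed \<Sigma> FT \<Gamma> (If a b c) t"
| T_Choose: "(\<forall>s\<in>set ss. typed \<Sigma> FT \<Gamma> s t) \<Longrightarrow> typed \<Sigma> FT \<Gamma> (Choose ss) t"
| T_Pair: "typed \<Sigma> FT \<Gamma> a t1 \<Longrightarrow> typed \<Sigma> FT \<Gamma> b t2 \<Longrightarrow> typed \<Sigma> FT \<Gamma> (Pair a b) (TProd t1 t2)"
| T_App: "typed \<Sigma> FT \<Gamma> a (TArr t1 t2) \<Longrightarrow> typed \<Sigma> FT \<Gamma> b t1 \<Longrightarrow> typed \<Sigma> FT \<Gamma> (App a b) t2"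

definition clause_typable :: "sort set \<Rightarrow> csig \<Rightarrow> (string \<Rightarrow> ty) \<Rightarrow> nat \<Rightarrow> clause \<Rightarrow> bool" where
  "clause_typable S \<Sigma> FT K cl \<longleftrightarrow> (case cl of (f, ls, s) \<Rightarrow>
     (\<exists>\<Gamma> t. (\<forall>x\<in>set (concat (map pvars ls)). ty_over S (\<Gamma> x) \<and> ord (\<Gamma> x) \<le> K) \<and>
        typed \<Sigma> FT \<Gamma> (lhs_expr f ls) t \<and> typed \<Sigma> FT \<Gamma> s t))"

definition data_order :: "sort set \<Rightarrow> csig \<Rightarrow> (string \<Rightarrow> ty) \<Rightarrow> nat \<Rightarrow> clause list \<Rightarrow> bool" where
  "data_order S \<Sigma> FT K p \<longleftrightarrow> (\<forall>cl\<in>set p. clause_typable S \<Sigma> FT K cl)"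

definition wf_prog :: "sort set \<Rightarrow> csig \<Rightarrow> (string \<Rightarrow> ty) \<Rightarrow> string set \<Rightarrow> clause list \<Rightarrow> bool" where
  "wf_prog S \<Sigma> FT D p \<longleftrightarrow>
     (\<forall>cl\<in>set p. case cl of (f, ls, s) \<Rightarrow>
        f \<in> D \<and> funs s \<subseteq> D \<and>
        distinct (concat (map pvars ls)) \<and>
        fvars s \<subseteq> set (concat (map pvars ls)) \<and>
        (\<exists>K. clause_typable S \<Sigma> FT K cl) \<and>
        cons_free cl) \<and>
     (\<forall>cl1\<in>set p. \<forall>cl2\<in>set p. fst cl1 = fst cl2 \<longrightarrow>
        length (fst (snd cl1)) = length (fst (snd cl2)))"

datatype cval = VCon cname "cval list" | VPair cval cval | VFun string "cval list"

definition arity :: "clause list \<Rightarrow> string \<Rightarrow> nat" where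
  "arity p f = (case find (\<lambda>cl. fst cl = f) p of None \<Rightarrow> 0 | Some cl \<Rightarrow> length (fst (snd cl)))"

fun pinst :: "(string \<Rightarrow> cval) \<Rightarrow> pat \<Rightarrow> cval" where
  "pinst \<gamma> (PVar x) = \<gamma> x"
| "pinst \<gamma> (PCon c ls) = VCon c (map (pinst \<gamma>) ls)"

definition clause_matches :: "clause \<Rightarrow> string \<Rightarrow> cval list \<Rightarrow> bool" where
  "clause_matches cl f vs \<longleftrightarrow> fst cl = f \<and> (\<exists>\<gamma>. map (pinst \<gamma>) (fst (snd cl)) = vs)"

inductive evl :: "clause list \<Rightarrow> (string \<Rightarrow> cval) \<Rightarrow> expr \<Rightarrow> cval \<Rightarrow> bool"
  and callv :: "clause list \<Rightarrow> string \<Rightarrow> cval list \<Rightarrow> cval \<Rightarrow> bool"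
  for p :: "clause list" where
  E_Var: "evl p \<gamma> (Var x) (\<gamma> x)"
| E_Fun: "callv p f [] w \<Longrightarrow> evl p \<gamma> (Fun f) w"
| E_Con: "list_all2 (evl p \<gamma>) ss bs \<Longrightarrow> evl p \<gamma> (ConApp c ss) (VCon c bs)"
| E_Pair: "evl p \<gamma> a v \<Longrightarrow> evl p \<gamma> b w \<Longrightarrow> evl p \<gamma> (Pair a b) (VPair v w)"
| E_Choose: "s \<in> set ss \<Longrightarrow> evl p \<gamma> s w \<Longrightarrow> evl p \<gamma> (Choose ss) w"
| E_IfT: "evl p \<gamma> a (VCon CTrue []) \<Longrightarrow> evl p \<gamma> b w \<Longrightarrow> evl p \<gamma> (If a b c) w"
| E_IfF: "evl p \<gamma> a (VCon CFalse []) \<Longrightarrow> evl p \<gamma> c w \<Longrightarrow> evl p \<gamma> (If a b c) w"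
| E_App: "evl p \<gamma> a (VFun f vs) \<Longrightarrow> evl p \<gamma> b v \<Longrightarrow> callv p f (vs @ [v]) w
          \<Longrightarrow> evl p \<gamma> (App a b) w"
| C_Partial: "length vs < arity p f \<Longrightarrow> callv p f vs (VFun f vs)"
| C_Clause: "i < length p \<Longrightarrow> p ! i = (f, ls, s) \<Longrightarrow>
             (\<forall>j<i. \<not> clause_matches (p ! j) f vs) \<Longrightarrow>
             map (pinst \<gamma>) ls = vs \<Longrightarrow> evl p \<gamma> s w \<Longrightarrow> callv p f vs w"

inductive vtyped :: "csig \<Rightarrow> (string \<Rightarrow> ty) \<Rightarrow> clause list \<Rightarrow> cval \<Rightarrow> ty \<Rightarrow> bool"
  for \<Sigma> :: csig and FT :: "string \<Rightarrow> ty" and p :: "clause list" where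
  V_Con: "csig_of \<Sigma> c = Some (tys, s) \<Longrightarrow> list_all2 (vtyped \<Sigma> FT p) vs tys
          \<Longrightarrow> vtyped \<Sigma> FT p (VCon c vs) (TBase s)"
| V_Pair: "vtyped \<Sigma> FT p v t1 \<Longrightarrow> vtyped \<Sigma> FT p w t2 \<Longrightarrow> vtyped \<Sigma> FT p (VPair v w) (TProd t1 t2)"
| V_Fun: "length vs < arity p f \<Longrightarrow> FT f = foldr TArr tys t \<Longrightarrow>
          list_all2 (vtyped \<Sigma> FT p) vs tys \<Longrightarrow> vtyped \<Sigma> FT p (VFun f vs) t"

fun vsyms :: "cval \<Rightarrow> string set" where
  "vsyms (VCon c vs) = \<Union>(vsyms ` set vs)"
| "vsyms (VPair v w) = vsyms v \<union> vsyms w"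
| "vsyms (VFun f vs) = insert f (\<Union>(vsyms ` set vs))"

fun blist :: "bool list \<Rightarrow> cval" where
  "blist [] = VCon CNil []"
| "blist (b # bs) = VCon CCons [VCon (if b then CTrue else CFalse) [], blist bs]"

record cmodule =
  alpha :: ty
  dsyms :: "string set"
  ftype :: "string \<Rightarrow> ty"
  seed :: string
  pred :: string
  zero :: string
  avals :: "nat \<Rightarrow> cval set"
  interp :: "nat \<Rightarrow> cval \<Rightarrow> nat"
  prog :: "clause list"

definition counting_module :: "sort set \<Rightarrow> csig \<Rightarrow> (nat \<Rightarrow> nat) \<Rightarrow> cmodule \<Rightarrow> bool" where
  "counting_module S \<Sigma> P M \<longleftrightarrow>
     (let a = alpha M; D = dsyms M; FT = ftype M; p = prog M; A = avals M; I = interp M in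
      distinct [seed M, pred M, zero M] \<and> {seed M, pred M, zero M} \<subseteq> D \<and>
      ty_over S a \<and> (\<forall>f\<in>D. ty_over S (FT f)) \<and>
      FT (seed M) = TArr (TBase SList) a \<and>
      FT (pred M) = TArr (TBase SList) (TArr a a) \<and>
      FT (zero M) = TArr (TBase SList) (TArr a (TBase SBool)) \<and>
      wf_prog S \<Sigma> FT D p \<and>
      (\<forall>n. \<forall>v\<in>A n. vtyped \<Sigma> FT p v a \<and> vsyms v \<subseteq> D) \<and>
      (\<forall>cs. let n = length cs; c = blist cs in
         (\<exists>!v. callv p (seed M) [c] v) \<and>
         (\<forall>v. callv p (seed M) [c] v \<longrightarrow> v \<in> A n \<and> I n v = P n - 1) \<and>
         (\<forall>v\<in>A n. I n v > 0 \<longrightarrow>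
            (\<exists>!w. callv p (pred M) [c, v] w) \<and>
            (\<forall>w. callv p (pred M) [c, v] w \<longrightarrow> w \<in> A n \<and> I n w = I n v - 1)) \<and>
         (\<forall>v\<in>A n.
            (callv p (zero M) [c, v] (VCon CTrue []) \<longleftrightarrow> I n v = 0) \<and>
            (callv p (zero M) [c, v] (VCon CFalse []) \<longleftrightarrow> I n v > 0))))"

end

theory Submission
  imports Defs
begin


definition bv :: "bool \<Rightarrow> cval" where "bv b = VCon (if b then CTrue else CFalse) []"

definition uniform :: "clause list \<Rightarrow> bool" where
  "uniform p \<longleftrightarrow> (\<forall>cl1\<in>set p. \<forall>cl2\<in>set p. fst cl1 = fst cl2 \<longrightarrow>
        length (fst (snd cl1)) = length (fst (snd cl2)))"

lemma evl_Var_iff: "evl p \<gamma> (Var x) w \<longleftrightarrow> w = \<gamma> x"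
  by (auto intro: evl_callv.intros elim: evl.cases)

lemma evl_Fun_iff: "evl p \<gamma> (Fun f) w \<longleftrightarrow> callv p f [] w"
  by (auto intro: evl_callv.intros elim: evl.cases)

lemma evl_Con0_iff: "evl p \<gamma> (ConApp c []) w \<longleftrightarrow> w = VCon c []"
  by (auto intro: evl_callv.intros elim: evl.cases)

lemma evl_Choose_iff: "evl p \<gamma> (Choose ss) w \<longleftrightarrow> (\<exists>s\<in>set ss. evl p \<gamma> s w)"
  by (auto intro: evl_callv.intros elim: evl.cases)

lemma evl_If_iff: "evl p \<gamma> (If a b c) w \<longleftrightarrow>
   (evl p \<gamma> a (VCon CTrue []) \<and> evl p \<gamma> b w) \<or> (evl p \<gamma> a (VCon CFalse []) \<and> evl p \<gamma> c w)"
  by (auto intro: evl_callv.intros elim: evl.cases)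

lemma evl_App_iff: "evl p \<gamma> (App a b) w \<longleftrightarrow>
   (\<exists>f vs v. evl p \<gamma> a (VFun f vs) \<and> evl p \<gamma> b v \<and> callv p f (vs @ [v]) w)"
  by (blast intro: evl_callv.intros elim: evl.cases)

lemma arity_find:
  assumes "find (\<lambda>cl. fst cl = f) p = Some cl" shows "arity p f = length (fst (snd cl))"
  using assms by (simp add: arity_def)

lemma callv_partial_iff:
  assumes u: "uniform p" and l: "length vs < arity p f"
  shows "callv p f vs w \<longleftrightarrow> w = VFun f vs"
proof
  assume "callv p f vs w"
  then show "w = VFun f vs"
  proof (cases rule: callv.cases)
    case (C_Clause i ls s \<gamma>)
    from l have "arity p f \<noteq> 0" by simp
    then obtain cl where fd: "find (\<lambda>cl. fst cl = f) p = Some cl"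
      by (auto simp: arity_def split: option.splits)
    then have cl: "cl \<in> set p" "fst cl = f" by (auto simp: find_Some_iff)
    have "p ! i \<in> set p" using C_Clause by (metis nth_mem)
    then have "length ls = length (fst (snd cl))" using u cl C_Clause unfolding uniform_def
      by (metis fst_conv snd_conv)
    moreover have "length ls = length vs" using C_Clause(4) by (metis length_map)
    ultimately show ?thesis using l arity_find[OF fd] by simp
  qed simp
next
  assume "w = VFun f vs" then show "callv p f vs w" using l by (simp add: C_Partial)
qed

lemma callv_len:
  assumes u: "uniform p" and c: "callv p f vs w"
  shows "length vs \<le> arity p f"
  using c
proof (cases rule: callv.cases)
  case (C_Clause i ls s \<gamma>)
  have "p ! i \<in> set p" "fst (p ! i) = f" using C_Clause by (metis nth_mem, simp)
  then obtain cl where fd: "find (\<lambda>cl. fst cl = f) p = Some cl"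
    by (metis (mono_tags, lifting) find_None_iff not_Some_eq)
  then have cl: "cl \<in> set p" "fst cl = f" by (auto simp: find_Some_iff)
  have "length ls = length (fst (snd cl))" using u cl C_Clause \<open>p ! i \<in> set p\<close> unfolding uniform_def
    by (metis fst_conv snd_conv)
  moreover have "length ls = length vs" using C_Clause(4) by (metis length_map)
  ultimately show ?thesis using arity_find[OF fd] by simp
qed simp

lemma evl_call:
  assumes u: "uniform p" and pos: "0 < arity p f" and l: "length es \<le> arity p f"
  shows "evl p \<gamma> (foldl App (Fun f) es) w \<longleftrightarrow>
         (\<exists>vs. list_all2 (evl p \<gamma>) es vs \<and> callv p f vs w)"
  using l
proof (induction es arbitrary: w rule: rev_induct)
  case Nil
  then show ?case by (simp add: evl_Fun_iff)
next
  case (snoc e es)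
  have lt: "length es < arity p f" using snoc.prems by simp
  have IH: "\<And>x. evl p \<gamma> (foldl App (Fun f) es) x \<longleftrightarrow> (\<exists>vs. list_all2 (evl p \<gamma>) es vs \<and> x = VFun f vs)"
  proof -
    fix x
    have "evl p \<gamma> (foldl App (Fun f) es) x \<longleftrightarrow> (\<exists>vs. list_all2 (evl p \<gamma>) es vs \<and> callv p f vs x)"
      using snoc.IH lt by simp
    also have "\<dots> \<longleftrightarrow> (\<exists>vs. list_all2 (evl p \<gamma>) es vs \<and> x = VFun f vs)"
      using callv_partial_iff[OF u] lt by (metis list_all2_lengthD)
    finally show "?thesis x" .
  qed
  show ?case
  proof
    assume "evl p \<gamma> (foldl App (Fun f) (es @ [e])) w"
    then obtain g us v where "evl p \<gamma> (foldl App (Fun f) es) (VFun g us)" "evl p \<gamma> e v"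
      "callv p g (us @ [v]) w" by (auto simp: evl_App_iff)
    then show "\<exists>vs. list_all2 (evl p \<gamma>) (es @ [e]) vs \<and> callv p f vs w"
      by (auto simp: IH intro!: exI[of _ "us @ [v]"] list_all2_appendI)
  next
    assume "\<exists>vs. list_all2 (evl p \<gamma>) (es @ [e]) vs \<and> callv p f vs w"
    then obtain us v where "list_all2 (evl p \<gamma>) es us" "evl p \<gamma> e v" "callv p f (us @ [v]) w"
      by (auto simp: list_all2_append1 list_all2_Cons1)
    then show "evl p \<gamma> (foldl App (Fun f) (es @ [e])) w"
      by (auto simp: evl_App_iff IH)
  qed
qed


lemma callv_single_arity:
  assumes cl: "(F, ls, s) \<in> set p" and un: "\<forall>cl\<in>set p. fst cl = F \<longrightarrow> cl = (F,ls,s)"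
  shows "arity p F = length ls"
proof -
  have "find (\<lambda>cl. fst cl = F) p \<noteq> None" using cl by (auto simp: find_None_iff)
  then obtain c where "find (\<lambda>cl. fst cl = F) p = Some c" by auto
  moreover then have "c = (F,ls,s)" using un by (auto simp: find_Some_iff)
  ultimately show ?thesis by (simp add: arity_def)
qed

lemma callv_single:
  assumes cl: "(F, ls, s) \<in> set p" and un: "\<forall>cl\<in>set p. fst cl = F \<longrightarrow> cl = (F,ls,s)"
  shows "callv p F vs w \<longleftrightarrow> (length vs < length ls \<and> w = VFun F vs) \<or>
            (\<exists>\<gamma>. map (pinst \<gamma>) ls = vs \<and> evl p \<gamma> s w)"
proof
  assume "callv p F vs w"
  then show "(length vs < length ls \<and> w = VFun F vs) \<or> (\<exists>\<gamma>. map (pinst \<gamma>) ls = vs \<and> evl p \<gamma> s w)"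
  proof (cases rule: callv.cases)
    case C_Partial then show ?thesis using callv_single_arity[OF cl un] by simp
  next
    case (C_Clause i ls' s' \<gamma>)
    have "p ! i \<in> set p" using C_Clause by (metis nth_mem)
    then have "(F, ls', s') = (F, ls, s)" using un C_Clause by (metis fst_conv)
    then show ?thesis using C_Clause by auto
  qed
next
  assume h: "(length vs < length ls \<and> w = VFun F vs) \<or> (\<exists>\<gamma>. map (pinst \<gamma>) ls = vs \<and> evl p \<gamma> s w)"
  show "callv p F vs w"
  proof (cases "length vs < length ls \<and> w = VFun F vs")
    case True then show ?thesis using callv_single_arity[OF cl un] by (auto intro: C_Partial)
  next
    case False
    then obtain \<gamma> where g: "map (pinst \<gamma>) ls = vs" "evl p \<gamma> s w" using h by auto
    define i where "i = (LEAST i. i < length p \<and> fst (p ! i) = F)"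
    have ex: "\<exists>i. i < length p \<and> fst (p ! i) = F" using cl by (metis fst_conv in_set_conv_nth)
    have i: "i < length p \<and> fst (p ! i) = F" unfolding i_def using LeastI_ex[OF ex] .
    have pi: "p ! i = (F, ls, s)" using i un by (metis nth_mem)
    have lt: "\<forall>j<i. \<not> clause_matches (p ! j) F vs"
    proof (intro allI impI)
      fix j assume "j < i"
      then have "\<not> (j < length p \<and> fst (p ! j) = F)" unfolding i_def using not_less_Least by blast
      then show "\<not> clause_matches (p ! j) F vs" using \<open>j < i\<close> i by (auto simp: clause_matches_def)
    qed
    show ?thesis using C_Clause[OF conjunct1[OF i] pi lt g] .
  qed
qed

lemma pinst_PVar: "map (pinst \<gamma>) (map PVar xs) = map \<gamma> xs"
  by simp

lemma find_append_Some: "find P xs = Some x \<Longrightarrow> find P (xs @ ys) = Some x"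
  by (induction xs) auto

lemma find_append_None: "find P ys = None \<Longrightarrow> find P (xs @ ys) = find P xs"
  by (induction xs) auto

lemma arity_append:
  "0 < arity po f \<Longrightarrow> arity (po @ pn) f = arity po f"
  by (auto simp: arity_def find_append_Some split: option.splits)

lemma lift_prog:
  "evl po \<gamma> e w \<Longrightarrow> evl (po @ pn) \<gamma> e w"
  "callv po f vs w \<Longrightarrow> callv (po @ pn) f vs w"
proof (induction rule: evl_callv.inducts)
  case (E_Con \<gamma> ss bs c)
  then show ?case by (auto intro!: evl_callv.intros elim: list_all2_mono)
next
  case (C_Partial vs f)
  then show ?case using arity_append[of po f pn] by (auto intro!: evl_callv.intros)
next
  case (C_Clause i f ls s vs \<gamma> w)
  show ?case
  proof (rule evl_callv.intros(10)[of i _ f ls s _ \<gamma>])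
    show "i < length (po @ pn)" using C_Clause by simp
    show "(po @ pn) ! i = (f, ls, s)" using C_Clause by (simp add: nth_append)
    show "\<forall>j<i. \<not> clause_matches ((po @ pn) ! j) f vs" using C_Clause by (simp add: nth_append)
  qed (use C_Clause in auto)
qed (auto intro: evl_callv.intros)

lemma pinst_vsyms: "x \<in> set (pvars l) \<Longrightarrow> vsyms (\<gamma> x) \<subseteq> vsyms (pinst \<gamma> l)"
proof (induction l)
  case (PVar y) then show ?case by simp
next
  case (PCon c ls) then show ?case by fastforce
qed

definition okprog :: "clause list \<Rightarrow> string set \<Rightarrow> bool" where
  "okprog po Bad \<longleftrightarrow> (\<forall>cl\<in>set po. fst cl \<notin> Bad \<and> funs (snd (snd cl)) \<inter> Bad = {} \<and>
       fvars (snd (snd cl)) \<subseteq> set (concat (map pvars (fst (snd cl)))))"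

lemma down_prog:
  assumes ok: "okprog po (fst ` set pn)"
  shows "evl (po @ pn) \<gamma> e w \<Longrightarrow> funs e \<inter> fst ` set pn = {} \<Longrightarrow>
           (\<forall>x\<in>fvars e. vsyms (\<gamma> x) \<inter> fst ` set pn = {}) \<Longrightarrow>
           evl po \<gamma> e w \<and> vsyms w \<inter> fst ` set pn = {}"
    and "callv (po @ pn) f vs w \<Longrightarrow> f \<notin> fst ` set pn \<Longrightarrow>
           (\<forall>v\<in>set vs. vsyms v \<inter> fst ` set pn = {}) \<Longrightarrow>
           callv po f vs w \<and> vsyms w \<inter> fst ` set pn = {}"
proof (induction rule: evl_callv.inducts)
  case (E_Var \<gamma> x) then show ?case by (auto intro: evl_callv.intros)
next
  case (E_Fun f w \<gamma>) then show ?case by (auto intro: evl_callv.intros)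
next
  case (E_Con \<gamma> ss bs c)
  have LL: "list_all2 (\<lambda>s b. evl po \<gamma> s b \<and> vsyms b \<inter> fst ` set pn = {}) ss bs"
  proof -
    have "\<forall>k<length ss. evl po \<gamma> (ss ! k) (bs ! k) \<and> vsyms (bs ! k) \<inter> fst ` set pn = {}"
    proof (intro allI impI)
      fix k assume k: "k < length ss"
      have "ss ! k \<in> set ss" using k by simp
      then have "funs (ss ! k) \<inter> fst ` set pn = {}" "\<forall>x\<in>fvars (ss ! k). vsyms (\<gamma> x) \<inter> fst ` set pn = {}"
        using E_Con.prems by auto
      then show "evl po \<gamma> (ss ! k) (bs ! k) \<and> vsyms (bs ! k) \<inter> fst ` set pn = {}"
        using E_Con.IH k by (auto simp: list_all2_conv_all_nth)
    qed
    then show ?thesis using E_Con.IH by (auto simp: list_all2_conv_all_nth)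
  qed
  then have A: "list_all2 (evl po \<gamma>) ss bs" by (auto simp: list_all2_conv_all_nth)
  have "\<forall>b\<in>set bs. vsyms b \<inter> fst ` set pn = {}"
  proof
    fix b assume "b \<in> set bs"
    then obtain k where "k < length bs" "b = bs ! k" by (auto simp: in_set_conv_nth)
    then show "vsyms b \<inter> fst ` set pn = {}" using LL
      by (auto simp: list_all2_conv_all_nth)
  qed
  with A have "list_all2 (evl po \<gamma>) ss bs" "\<forall>b\<in>set bs. vsyms b \<inter> fst ` set pn = {}" by auto
  then show ?case by (auto intro: evl_callv.intros)
next
  case (E_Pair \<gamma> a v b w)
  have "evl po \<gamma> a v \<and> vsyms v \<inter> fst ` set pn = {}" using E_Pair by (simp only: Un_iff funs.simps fvars.simps Int_Un_distrib2 Un_empty ball_Un) blast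
  moreover have "evl po \<gamma> b w \<and> vsyms w \<inter> fst ` set pn = {}" using E_Pair by (simp only: Un_iff funs.simps fvars.simps Int_Un_distrib2 Un_empty ball_Un) blast
  ultimately show ?case by (auto intro: evl_callv.intros)
next
  case (E_Choose s ss \<gamma> w)
  have "evl po \<gamma> s w \<and> vsyms w \<inter> fst ` set pn = {}" by (rule E_Choose.IH) (use E_Choose in auto)
  then show ?case using E_Choose by (auto intro: evl_callv.intros)
next
  case (E_IfT \<gamma> a b w c)
  have "evl po \<gamma> a (VCon CTrue [])" using E_IfT by (simp only: Un_iff funs.simps fvars.simps Int_Un_distrib2 Un_empty ball_Un) blast
  moreover have "evl po \<gamma> b w \<and> vsyms w \<inter> fst ` set pn = {}" using E_IfT by (simp only: Un_iff funs.simps fvars.simps Int_Un_distrib2 Un_empty ball_Un) blast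
  ultimately show ?case by (auto intro: evl_callv.intros)
next
  case (E_IfF \<gamma> a c w b)
  have "evl po \<gamma> a (VCon CFalse [])" using E_IfF by (simp only: Un_iff funs.simps fvars.simps Int_Un_distrib2 Un_empty ball_Un) blast
  moreover have "evl po \<gamma> c w \<and> vsyms w \<inter> fst ` set pn = {}" using E_IfF by (simp only: Un_iff funs.simps fvars.simps Int_Un_distrib2 Un_empty ball_Un) blast
  ultimately show ?case by (auto intro: evl_callv.intros)
next
  case (E_App \<gamma> a f vs b v w)
  have 1: "evl po \<gamma> a (VFun f vs) \<and> vsyms (VFun f vs) \<inter> fst ` set pn = {}" using E_App by (simp only: Un_iff funs.simps fvars.simps Int_Un_distrib2 Un_empty ball_Un) blast
  have 2: "evl po \<gamma> b v \<and> vsyms v \<inter> fst ` set pn = {}" using E_App by (simp only: Un_iff funs.simps fvars.simps Int_Un_distrib2 Un_empty ball_Un) blast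
  have f: "f \<notin> fst ` set pn" using 1 by auto
  have vs: "\<forall>u\<in>set (vs @ [v]). vsyms u \<inter> fst ` set pn = {}" using 1 2 by auto
  have 3: "callv po f (vs @ [v]) w \<and> vsyms w \<inter> fst ` set pn = {}" using E_App(6)[OF f vs] .
  show ?case using 1 2 3 by (auto intro: evl_callv.intros)
next
  case (C_Partial vs f)
  have "find (\<lambda>cl. fst cl = f) pn = None" using C_Partial by (force simp: find_None_iff)
  then have "arity (po @ pn) f = arity po f" by (simp add: arity_def find_append_None)
  then show ?case using C_Partial by (auto intro: evl_callv.intros)
next
  case (C_Clause i f ls s vs \<gamma> w)
  have ilt: "i < length po"
  proof (rule ccontr)
    assume "\<not> i < length po"
    then have "(po @ pn) ! i = pn ! (i - length po)" "i - length po < length pn" using C_Clause by (auto simp: nth_append)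
    then have "(po @ pn) ! i \<in> set pn" by (metis nth_mem)
    then show False using C_Clause by (metis fst_conv image_eqI)
  qed
  then have pi: "po ! i = (f, ls, s)" using C_Clause by (simp add: nth_append)
  then have cl: "(f, ls, s) \<in> set po" using ilt by (metis nth_mem)
  have fv: "\<forall>x\<in>fvars s. vsyms (\<gamma> x) \<inter> fst ` set pn = {}"
  proof
    fix x assume "x \<in> fvars s"
    then have "x \<in> set (concat (map pvars ls))" using bspec[OF ok[unfolded okprog_def] cl] by auto
    then obtain l where l: "l \<in> set ls" "x \<in> set (pvars l)" by auto
    then have "pinst \<gamma> l \<in> set vs" using C_Clause by auto
    then show "vsyms (\<gamma> x) \<inter> fst ` set pn = {}" using pinst_vsyms[OF l(2), of \<gamma>] C_Clause by blast
  qed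
  have fs: "funs s \<inter> fst ` set pn = {}" using bspec[OF ok[unfolded okprog_def] cl] by simp
  have "evl po \<gamma> s w \<and> vsyms w \<inter> fst ` set pn = {}" using C_Clause fv fs by blast
  moreover have "\<forall>j<i. \<not> clause_matches (po ! j) f vs" using C_Clause ilt by (simp add: nth_append)
  ultimately show ?case using ilt pi C_Clause by (auto intro: evl_callv.intros(10))
qed


lemma bit_dec:
  fixes k :: nat
  assumes "0 < k"
  shows "bit (k - 1) i = (if \<forall>i'<i. \<not> bit k i' then \<not> bit k i else bit k i)"
  using assms
proof (induction i arbitrary: k)
  case 0
  then show ?case by (simp add: bit_0)
next
  case (Suc i)
  show ?case
  proof (cases "odd k")
    case True
    then have "(k - 1) div 2 = k div 2" by presburger
    then show ?thesis using True by (auto simp: bit_Suc bit_0)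
  next
    case False
    then have h: "(k - 1) div 2 = k div 2 - 1" "0 < k div 2" using Suc.prems by presburger+
    have "(\<forall>i'<Suc i. \<not> bit k i') \<longleftrightarrow> (\<forall>i'<i. \<not> bit (k div 2) i')"
      using False by (auto simp: bit_Suc bit_0 less_Suc_eq_0_disj)
    then show ?thesis using Suc.IH[OF h(2)] h(1) by (simp add: bit_Suc)
  qed
qed

lemma bit_ge_zero:
  fixes k :: nat
  assumes "k < 2 ^ N" "N \<le> i" shows "\<not> bit k i"
proof -
  have "k < 2 ^ i" using assms by (meson le_less_trans order.strict_trans1 power_increasing_iff one_less_numeral_iff semiring_norm(76) less_le_trans)
  then show ?thesis by (simp add: bit_nat_def)
qed

lemma bits_eq:
  fixes k k' :: nat
  assumes "k < 2 ^ N" "k' < 2 ^ N" "\<forall>i<N. bit k i = bit k' i"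
  shows "k = k'"
proof (rule bit_eqI)
  fix i show "bit k i = bit k' i"
    using assms bit_ge_zero[of k N i] bit_ge_zero[of k' N i] by (cases "i < N") auto
qed

lemma bit_mask_nat: "bit (2 ^ N - 1 :: nat) i \<longleftrightarrow> i < N"
proof -
  have "(2 ^ N - 1 :: nat) = mask N" by (simp add: mask_eq_exp_minus_1)
  then show ?thesis by (simp add: bit_mask_iff)
qed

lemma all_zero_bits:
  fixes k :: nat
  assumes "k < 2 ^ N" shows "(\<forall>i<N. \<not> bit k i) \<longleftrightarrow> k = 0"
  using bits_eq[OF assms, of 0] by auto



definition FAIL :: expr where "FAIL = Choose []"
definition TT :: expr where "TT = ConApp CTrue []"
definition FF :: expr where "FF = ConApp CFalse []"

definition nEQ :: "string \<Rightarrow> string" where "nEQ pre = pre @ ''EQ''"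
definition nEN :: "string \<Rightarrow> string" where "nEN pre = pre @ ''EN''"
definition nBIT :: "string \<Rightarrow> string" where "nBIT pre = pre @ ''BIT''"
definition nLZ :: "string \<Rightarrow> string" where "nLZ pre = pre @ ''LZ''"
definition nNB :: "string \<Rightarrow> string" where "nNB pre = pre @ ''NB''"
definition nP2 :: "string \<Rightarrow> string" where "nP2 pre = pre @ ''PT''"
definition nPR :: "string \<Rightarrow> string" where "nPR pre = pre @ ''PR''"
definition nSD :: "string \<Rightarrow> string" where "nSD pre = pre @ ''SD''"
definition nZR :: "string \<Rightarrow> string" where "nZR pre = pre @ ''ZR''"

abbreviation cE :: "string \<Rightarrow> expr list \<Rightarrow> expr" where "cE f es \<equiv> foldl App (Fun f) es"

definition bEQ :: "string \<Rightarrow> string \<Rightarrow> string \<Rightarrow> expr" where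
  "bEQ pre pd zd = If (cE zd [Var ''c'', Var ''i''])
      (If (cE zd [Var ''c'', Var ''j'']) TT FF)
      (If (cE zd [Var ''c'', Var ''j'']) FF
          (cE (nEQ pre) [Var ''c'', cE pd [Var ''c'', Var ''i''], cE pd [Var ''c'', Var ''j'']]))"

definition bEN :: "string \<Rightarrow> string \<Rightarrow> string \<Rightarrow> expr" where
  "bEN pre pd zd = If (cE zd [Var ''c'', Var ''i'']) FAIL
      (Choose [Var ''i'', cE (nEN pre) [Var ''c'', cE pd [Var ''c'', Var ''i'']]])"

definition bBIT :: "string \<Rightarrow> expr" where
  "bBIT pre = Choose [If (cE (nEQ pre) [Var ''c'', Var ''i'', App (Var ''f'') TT]) TT FAIL,
                      If (cE (nEQ pre) [Var ''c'', Var ''i'', App (Var ''f'') FF]) FF FAIL]"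

definition bLZ :: "string \<Rightarrow> string \<Rightarrow> string \<Rightarrow> expr" where
  "bLZ pre pd zd = If (cE zd [Var ''c'', Var ''m'']) TT
      (If (cE (nBIT pre) [Var ''c'', Var ''f'', Var ''m'']) FF
          (cE (nLZ pre) [Var ''c'', Var ''f'', cE pd [Var ''c'', Var ''m'']]))"

definition bNB :: "string \<Rightarrow> string \<Rightarrow> expr" where
  "bNB pre pd = If (cE (nLZ pre) [Var ''c'', Var ''f'', cE pd [Var ''c'', Var ''j'']])
      (If (cE (nBIT pre) [Var ''c'', Var ''f'', Var ''j'']) FF TT)
      (cE (nBIT pre) [Var ''c'', Var ''f'', Var ''j''])"

definition bP2 :: "string \<Rightarrow> expr" where
  "bP2 pre = If (cE (nNB pre) [Var ''c'', Var ''f'', Var ''j''])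
      (If (Var ''b'') (Var ''j'') FAIL) (If (Var ''b'') FAIL (Var ''j''))"

definition bPR :: "string \<Rightarrow> string \<Rightarrow> expr" where
  "bPR pre sd = cE (nP2 pre) [Var ''c'', Var ''f'', Var ''b'', cE (nEN pre) [Var ''c'', cE sd [Var ''c'']]]"

definition bSD :: "string \<Rightarrow> string \<Rightarrow> expr" where
  "bSD pre sd = If (Var ''b'') (cE (nEN pre) [Var ''c'', cE sd [Var ''c'']]) FAIL"

definition bZR :: "string \<Rightarrow> string \<Rightarrow> expr" where
  "bZR pre sd = cE (nLZ pre) [Var ''c'', Var ''f'', cE sd [Var ''c'']]"

definition newprog :: "string \<Rightarrow> string \<Rightarrow> string \<Rightarrow> string \<Rightarrow> clause list" where
  "newprog pre sd pd zd = [
     (nEQ pre, map PVar [''c'', ''i'', ''j''], bEQ pre pd zd),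
     (nEN pre, map PVar [''c'', ''i''], bEN pre pd zd),
     (nBIT pre, map PVar [''c'', ''f'', ''i''], bBIT pre),
     (nLZ pre, map PVar [''c'', ''f'', ''m''], bLZ pre pd zd),
     (nNB pre, map PVar [''c'', ''f'', ''j''], bNB pre pd),
     (nP2 pre, map PVar [''c'', ''f'', ''b'', ''j''], bP2 pre),
     (nPR pre, map PVar [''c'', ''f'', ''b''], bPR pre sd),
     (nSD pre, map PVar [''c'', ''b''], bSD pre sd),
     (nZR pre, map PVar [''c'', ''f''], bZR pre sd)]"

lemma evl_FAIL[simp]: "\<not> evl p \<gamma> FAIL w" by (simp add: FAIL_def evl_Choose_iff)
lemma evl_TT[simp]: "evl p \<gamma> TT w \<longleftrightarrow> w = bv True" by (simp add: TT_def bv_def evl_Con0_iff)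
lemma evl_FF[simp]: "evl p \<gamma> FF w \<longleftrightarrow> w = bv False" by (simp add: FF_def bv_def evl_Con0_iff)
lemma bv_inj[simp]: "bv a = bv b \<longleftrightarrow> a = b" by (auto simp: bv_def)
lemma bv_T[simp]: "VCon CTrue [] = bv b \<longleftrightarrow> b" "bv b = VCon CTrue [] \<longleftrightarrow> b" by (auto simp: bv_def)
lemma bv_F[simp]: "VCon CFalse [] = bv b \<longleftrightarrow> \<not>b" "bv b = VCon CFalse [] \<longleftrightarrow> \<not>b" by (auto simp: bv_def)

lemma evl_If_bv: "evl p \<gamma> (If a b c) w \<longleftrightarrow>
   (evl p \<gamma> a (bv True) \<and> evl p \<gamma> b w) \<or> (evl p \<gamma> a (bv False) \<and> evl p \<gamma> c w)"
  by (simp add: evl_If_iff bv_def)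

lemma la2_1: "list_all2 R [a] vs \<longleftrightarrow> (\<exists>x. vs = [x] \<and> R a x)"
  by (auto simp: list_all2_Cons1)
lemma la2_2: "list_all2 R [a, b] vs \<longleftrightarrow> (\<exists>x y. vs = [x, y] \<and> R a x \<and> R b y)"
  by (auto simp: list_all2_Cons1)
lemma la2_3: "list_all2 R [a, b, d] vs \<longleftrightarrow> (\<exists>x y z. vs = [x, y, z] \<and> R a x \<and> R b y \<and> R d z)"
  by (auto simp: list_all2_Cons1)
lemma la2_4: "list_all2 R [a, b, d, e] vs \<longleftrightarrow>
     (\<exists>x y z u. vs = [x, y, z, u] \<and> R a x \<and> R b y \<and> R d z \<and> R e u)"
  by (auto simp: list_all2_Cons1)
lemma lex_1: "(\<exists>vs. list_all2 R [a] vs \<and> Q vs) \<longleftrightarrow> (\<exists>x. R a x \<and> Q [x])"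
  unfolding la2_1 by blast
lemma lex_2: "(\<exists>vs. list_all2 R [a, b] vs \<and> Q vs) \<longleftrightarrow> (\<exists>x y. R a x \<and> R b y \<and> Q [x, y])"
  unfolding la2_2 by blast
lemma lex_3: "(\<exists>vs. list_all2 R [a, b, d] vs \<and> Q vs) \<longleftrightarrow> (\<exists>x y z. R a x \<and> R b y \<and> R d z \<and> Q [x, y, z])"
  unfolding la2_3 by blast
lemma lex_4: "(\<exists>vs. list_all2 R [a, b, d, e] vs \<and> Q vs) \<longleftrightarrow>
     (\<exists>x y z u. R a x \<and> R b y \<and> R d z \<and> R e u \<and> Q [x, y, z, u])"
  unfolding la2_4 by blast
lemmas la2 = lex_1 lex_2 lex_3 lex_4

definition qry :: "clause list \<Rightarrow> cval \<Rightarrow> bool \<Rightarrow> cval \<Rightarrow> bool" where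
  "qry p v b j \<longleftrightarrow> (\<exists>g us. v = VFun g us \<and> callv p g (us @ [bv b]) j)"

lemma evl_query: "evl p \<gamma> (App (Var x) TT) j \<longleftrightarrow> qry p (\<gamma> x) True j"
     "evl p \<gamma> (App (Var x) FF) j \<longleftrightarrow> qry p (\<gamma> x) False j"
  by (auto simp: evl_App_iff evl_Var_iff qry_def) (metis)+

definition rep :: "clause list \<Rightarrow> cval set \<Rightarrow> (cval \<Rightarrow> nat) \<Rightarrow> nat \<Rightarrow> cval \<Rightarrow> nat \<Rightarrow> bool" where
  "rep p A I N v k \<longleftrightarrow> (\<forall>b. (\<forall>j. qry p v b j \<longrightarrow> j \<in> A \<and> 1 \<le> I j \<and> I j \<le> N \<and> bit k (I j - 1) = b) \<and>
      (\<forall>m. 1 \<le> m \<longrightarrow> m \<le> N \<longrightarrow> bit k (m - 1) = b \<longrightarrow> (\<exists>j. qry p v b j \<and> I j = m)))"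

definition nbit :: "nat \<Rightarrow> nat \<Rightarrow> bool" where
  "nbit k m = (if (\<forall>t. 1 \<le> t \<longrightarrow> t \<le> m - 1 \<longrightarrow> \<not> bit k (t - 1)) then \<not> bit k (m - 1) else bit k (m - 1))"

lemma nbit_dec: "0 < k \<Longrightarrow> 1 \<le> m \<Longrightarrow> nbit k m = bit (k - 1) (m - 1)"
proof -
  assume k: "0 < k" and m: "1 \<le> m"
  have "(\<forall>t. 1 \<le> t \<longrightarrow> t \<le> m - 1 \<longrightarrow> \<not> bit k (t - 1)) \<longleftrightarrow> (\<forall>i'<m - 1. \<not> bit k i')"
  proof
    assume h: "\<forall>t. 1 \<le> t \<longrightarrow> t \<le> m - 1 \<longrightarrow> \<not> bit k (t - 1)"
    show "\<forall>i'<m - 1. \<not> bit k i'"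
    proof (intro allI impI)
      fix i' assume "i' < m - 1" then show "\<not> bit k i'" using h[rule_format, of "Suc i'"] by simp
    qed
  next
    assume "\<forall>i'<m - 1. \<not> bit k i'" then show "\<forall>t. 1 \<le> t \<longrightarrow> t \<le> m - 1 \<longrightarrow> \<not> bit k (t - 1)" by auto
  qed
  then show ?thesis unfolding nbit_def using bit_dec[OF k, of "m - 1"] by simp
qed

locale sem =
  fixes p :: "clause list" and pre sd pd zd :: string
    and Ao :: "nat \<Rightarrow> cval set" and Io :: "nat \<Rightarrow> cval \<Rightarrow> nat" and P :: "nat \<Rightarrow> nat"
  assumes uni: "uniform p"
    and newin: "\<forall>cl\<in>set (newprog pre sd pd zd). cl \<in> set p \<and> (\<forall>cl'\<in>set p. fst cl' = fst cl \<longrightarrow> cl' = cl)"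
    and A_seed: "\<forall>cs v. callv p sd [blist cs] v \<longrightarrow> v \<in> Ao (length cs) \<and> Io (length cs) v = P (length cs) - 1"
    and A_seed_ex: "\<forall>cs. \<exists>v. callv p sd [blist cs] v"
    and A_pred: "\<forall>cs. \<forall>v\<in>Ao (length cs). 0 < Io (length cs) v \<longrightarrow>
         (\<exists>w. callv p pd [blist cs, v] w) \<and>
         (\<forall>w. callv p pd [blist cs, v] w \<longrightarrow> w \<in> Ao (length cs) \<and> Io (length cs) w = Io (length cs) v - 1)"
    and A_zero: "\<forall>cs. \<forall>v\<in>Ao (length cs).
         (callv p zd [blist cs, v] (VCon CTrue []) \<longleftrightarrow> Io (length cs) v = 0) \<and>
         (callv p zd [blist cs, v] (VCon CFalse []) \<longleftrightarrow> 0 < Io (length cs) v)"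
begin

lemma callv_new:
  assumes "(F, map PVar xs, s) \<in> set (newprog pre sd pd zd)"
  shows "arity p F = length xs"
    and "callv p F vs w \<longleftrightarrow> (length vs < length xs \<and> w = VFun F vs) \<or>
            (\<exists>\<gamma>. map \<gamma> xs = vs \<and> evl p \<gamma> s w)"
proof -
  have a: "(F, map PVar xs, s) \<in> set p" "\<forall>cl'\<in>set p. fst cl' = F \<longrightarrow> cl' = (F, map PVar xs, s)"
    using newin assms by (metis fst_conv)+
  show "arity p F = length xs" using callv_single_arity[OF a] by simp
  show "callv p F vs w \<longleftrightarrow> (length vs < length xs \<and> w = VFun F vs) \<or>
            (\<exists>\<gamma>. map \<gamma> xs = vs \<and> evl p \<gamma> s w)"
    using callv_single[OF a] by (simp add: o_def)
qed

lemma callv_new_full: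
  assumes "(F, map PVar xs, s) \<in> set (newprog pre sd pd zd)" "length vs = length xs"
  shows "callv p F vs w \<longleftrightarrow> (\<exists>\<gamma>. map \<gamma> xs = vs \<and> evl p \<gamma> s w)"
  using callv_new(2)[OF assms(1)] assms(2) by simp

lemma evl_new:
  assumes "(F, map PVar xs, s) \<in> set (newprog pre sd pd zd)" "length es = length xs" "xs \<noteq> []"
  shows "evl p \<gamma> (cE F es) w \<longleftrightarrow> (\<exists>vs. list_all2 (evl p \<gamma>) es vs \<and> callv p F vs w)"
  using evl_call[OF uni, of F es \<gamma> w] callv_new(1)[OF assms(1)] assms(2,3) by simp

lemma ex_env: "\<exists>\<gamma>::string \<Rightarrow> cval. map \<gamma> xs = vs" if "distinct xs" "length xs = length vs"
  using that
proof (induction xs arbitrary: vs)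
  case Nil then show ?case by simp
next
  case (Cons x xs)
  then obtain v vs' where vs: "vs = v # vs'" by (cases vs) auto
  then obtain \<gamma> where g: "map \<gamma> xs = vs'" using Cons by auto
  have "map (\<gamma>(x := v)) xs = vs'" using g Cons.prems by (auto intro!: map_cong)
  then show ?case using vs by (auto intro!: exI[of _ "\<gamma>(x := v)"])
qed

lemma callv_new_char:
  assumes "(F, map PVar xs, s) \<in> set (newprog pre sd pd zd)" "length vs = length xs" "distinct xs"
    and "\<And>\<gamma>. map \<gamma> xs = vs \<Longrightarrow> evl p \<gamma> s w \<longleftrightarrow> Q"
  shows "callv p F vs w \<longleftrightarrow> Q"
  using callv_new_full[OF assms(1,2)] assms(4) ex_env[OF assms(3), of vs] assms(2) by metis

context fixes cs :: "bool list" begin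

abbreviation "n \<equiv> length cs"
abbreviation "c \<equiv> blist cs"

lemma pred_res: "i \<in> Ao n \<Longrightarrow> Io n i \<noteq> 0 \<Longrightarrow> callv p pd [c, i] i' \<Longrightarrow> i' \<in> Ao n \<and> Io n i' = Io n i - 1"
  using A_pred by blast
lemma pred_ex: "i \<in> Ao n \<Longrightarrow> Io n i \<noteq> 0 \<Longrightarrow> \<exists>i'. callv p pd [c, i] i'"
  using A_pred by blast
lemma seed_res: "callv p sd [c] s0 \<Longrightarrow> s0 \<in> Ao n \<and> Io n s0 = P n - 1"
  using A_seed by blast
lemma seed_ex: "\<exists>s0. callv p sd [c] s0"
  using A_seed_ex by blast

lemma zd_arity: "2 \<le> arity p zd"
proof -
  obtain s0 where s0: "callv p sd [c] s0" using A_seed_ex by blast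
  then have "s0 \<in> Ao n" using A_seed by blast
  then have "callv p zd [c, s0] (VCon CTrue []) \<or> callv p zd [c, s0] (VCon CFalse [])"
    using A_zero by blast
  then show ?thesis using callv_len[OF uni] by fastforce
qed

lemma sd_arity: "1 \<le> arity p sd"
  using A_seed_ex callv_len[OF uni] by fastforce

lemma evl_zero_if:
  assumes "\<gamma> ''c'' = c" "\<gamma> x = i" "i \<in> Ao n"
  shows "evl p \<gamma> (If (cE zd [Var ''c'', Var x]) A B) w \<longleftrightarrow>
           (Io n i = 0 \<and> evl p \<gamma> A w) \<or> (0 < Io n i \<and> evl p \<gamma> B w)"
proof -
  have "evl p \<gamma> (cE zd [Var ''c'', Var x]) u \<longleftrightarrow> callv p zd [c, i] u" for u
    using evl_call[OF uni, of zd "[Var ''c'', Var x]" \<gamma> u] zd_arity assms by (simp add: evl_Var_iff list_all2_Cons1)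
  then show ?thesis using A_zero assms(3) by (simp add: evl_If_iff)
qed

lemma evl_pred:
  assumes "\<gamma> ''c'' = c" "\<gamma> x = i" "i \<in> Ao n" "Io n i \<noteq> 0"
  shows "evl p \<gamma> (cE pd [Var ''c'', Var x]) u \<longleftrightarrow> callv p pd [c, i] u"
proof -
  obtain w where "callv p pd [c, i] w" using A_pred assms(3,4) by (metis not_gr0)
  then have "2 \<le> arity p pd" using callv_len[OF uni] by fastforce
  then show ?thesis using evl_call[OF uni, of pd "[Var ''c'', Var x]" \<gamma> u] assms by (simp add: evl_Var_iff list_all2_Cons1)
qed

lemma evl_seed:
  assumes "\<gamma> ''c'' = c"
  shows "evl p \<gamma> (cE sd [Var ''c'']) u \<longleftrightarrow> callv p sd [c] u"
  using evl_call[OF uni, of sd "[Var ''c'']" \<gamma> u] sd_arity assms by (simp add: evl_Var_iff list_all2_Cons1)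

lemma cl_EQ: "(nEQ pre, map PVar [''c'', ''i'', ''j''], bEQ pre pd zd) \<in> set (newprog pre sd pd zd)"
  and cl_EN: "(nEN pre, map PVar [''c'', ''i''], bEN pre pd zd) \<in> set (newprog pre sd pd zd)"
  and cl_BIT: "(nBIT pre, map PVar [''c'', ''f'', ''i''], bBIT pre) \<in> set (newprog pre sd pd zd)"
  and cl_LZ: "(nLZ pre, map PVar [''c'', ''f'', ''m''], bLZ pre pd zd) \<in> set (newprog pre sd pd zd)"
  and cl_NB: "(nNB pre, map PVar [''c'', ''f'', ''j''], bNB pre pd) \<in> set (newprog pre sd pd zd)"
  and cl_P2: "(nP2 pre, map PVar [''c'', ''f'', ''b'', ''j''], bP2 pre) \<in> set (newprog pre sd pd zd)"
  and cl_PR: "(nPR pre, map PVar [''c'', ''f'', ''b''], bPR pre sd) \<in> set (newprog pre sd pd zd)"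
  and cl_SD: "(nSD pre, map PVar [''c'', ''b''], bSD pre sd) \<in> set (newprog pre sd pd zd)"
  and cl_ZR: "(nZR pre, map PVar [''c'', ''f''], bZR pre sd) \<in> set (newprog pre sd pd zd)"
  by (simp_all add: newprog_def)

lemma EQ_sem:
  assumes "i \<in> Ao n" "j \<in> Ao n"
  shows "callv p (nEQ pre) [c, i, j] w \<longleftrightarrow> w = bv (Io n i = Io n j)"
  using assms
proof (induction "Io n i" arbitrary: i j w rule: less_induct)
  case less
  show ?case
  proof (rule callv_new_char[OF cl_EQ], simp, simp)
    fix \<gamma> assume g: "map \<gamma> [''c'', ''i'', ''j''] = [c, i, j]"
    then have g1: "\<gamma> ''c'' = c" "\<gamma> ''i'' = i" "\<gamma> ''j'' = j" by auto
    show "evl p \<gamma> (bEQ pre pd zd) w \<longleftrightarrow> w = bv (Io n i = Io n j)"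
    proof (cases "Io n i = 0")
      case True
      then show ?thesis unfolding bEQ_def
        using evl_zero_if[OF g1(1) g1(2) less.prems(1)] evl_zero_if[OF g1(1) g1(3) less.prems(2)]
        by auto
    next
      case False
      show ?thesis
      proof (cases "Io n j = 0")
        case True
        then show ?thesis unfolding bEQ_def
          using False evl_zero_if[OF g1(1) g1(2) less.prems(1)] evl_zero_if[OF g1(1) g1(3) less.prems(2)]
          by auto
      next
        case False2: False
        have rec: "evl p \<gamma> (cE (nEQ pre) [Var ''c'', cE pd [Var ''c'', Var ''i''], cE pd [Var ''c'', Var ''j'']]) w
             \<longleftrightarrow> (\<exists>i' j'. callv p pd [c, i] i' \<and> callv p pd [c, j] j' \<and> callv p (nEQ pre) [c, i', j'] w)"
          using evl_new[OF cl_EQ, of "[Var ''c'', cE pd [Var ''c'', Var ''i''], cE pd [Var ''c'', Var ''j'']]" \<gamma> w]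
          by (simp add: la2 evl_Var_iff g1 evl_pred[OF g1(1) g1(2) less.prems(1) False, simplified]
                evl_pred[OF g1(1) g1(3) less.prems(2) False2, simplified])
        have "(\<exists>i' j'. callv p pd [c, i] i' \<and> callv p pd [c, j] j' \<and> callv p (nEQ pre) [c, i', j'] w)
              \<longleftrightarrow> w = bv (Io n i = Io n j)"
        proof
          assume "\<exists>i' j'. callv p pd [c, i] i' \<and> callv p pd [c, j] j' \<and> callv p (nEQ pre) [c, i', j'] w"
          then obtain i' j' where h: "callv p pd [c, i] i'" "callv p pd [c, j] j'" "callv p (nEQ pre) [c, i', j'] w"
            by blast
          have i': "i' \<in> Ao n" "Io n i' = Io n i - 1" using pred_res[OF less.prems(1) False h(1)] by auto
          have j': "j' \<in> Ao n" "Io n j' = Io n j - 1" using pred_res[OF less.prems(2) False2 h(2)] by auto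
          have "w = bv (Io n i' = Io n j')" using less.hyps[of i' j' w] i' j' h(3) False by simp
          then show "w = bv (Io n i = Io n j)" using i' j' False False2 by auto
        next
          assume w: "w = bv (Io n i = Io n j)"
          obtain i' where h1: "callv p pd [c, i] i'" using pred_ex less.prems(1) False by blast
          obtain j' where h2: "callv p pd [c, j] j'" using pred_ex less.prems(2) False2 by blast
          have i': "i' \<in> Ao n" "Io n i' = Io n i - 1" using pred_res[OF less.prems(1) False h1] by auto
          have j': "j' \<in> Ao n" "Io n j' = Io n j - 1" using pred_res[OF less.prems(2) False2 h2] by auto
          have "callv p (nEQ pre) [c, i', j'] w"
            using less.hyps[of i' j' w] i' j' w False False2 by auto
          then show "\<exists>i' j'. callv p pd [c, i] i' \<and> callv p pd [c, j] j' \<and> callv p (nEQ pre) [c, i', j'] w"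
            using h1 h2 by blast
        qed
        then show ?thesis unfolding bEQ_def
          using False False2 evl_zero_if[OF g1(1) g1(2) less.prems(1)] evl_zero_if[OF g1(1) g1(3) less.prems(2)] rec
          by auto
      qed
    qed
  qed
qed

lemma EN_unf:
  assumes "i \<in> Ao n"
  shows "callv p (nEN pre) [c, i] j \<longleftrightarrow>
           (Io n i \<noteq> 0 \<and> (j = i \<or> (\<exists>i'. callv p pd [c, i] i' \<and> callv p (nEN pre) [c, i'] j)))"
proof (rule callv_new_char[OF cl_EN], simp, simp)
  fix \<gamma> assume "map \<gamma> [''c'', ''i''] = [c, i]"
  then have g1: "\<gamma> ''c'' = c" "\<gamma> ''i'' = i" by auto
  show "evl p \<gamma> (bEN pre pd zd) j \<longleftrightarrow>
           (Io n i \<noteq> 0 \<and> (j = i \<or> (\<exists>i'. callv p pd [c, i] i' \<and> callv p (nEN pre) [c, i'] j)))"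
  proof (cases "Io n i = 0")
    case True then show ?thesis unfolding bEN_def using evl_zero_if[OF g1 assms] by simp
  next
    case False
    have "evl p \<gamma> (cE (nEN pre) [Var ''c'', cE pd [Var ''c'', Var ''i'']]) j \<longleftrightarrow>
           (\<exists>i'. callv p pd [c, i] i' \<and> callv p (nEN pre) [c, i'] j)"
      using evl_new[OF cl_EN, of "[Var ''c'', cE pd [Var ''c'', Var ''i'']]" \<gamma> j]
      by (simp add: la2 evl_Var_iff g1 evl_pred[OF g1 assms False, simplified])
    then show ?thesis unfolding bEN_def using evl_zero_if[OF g1 assms] False
      by (simp add: evl_Choose_iff evl_Var_iff g1)
  qed
qed

lemma EN_res:
  assumes "i \<in> Ao n" "callv p (nEN pre) [c, i] j"
  shows "j \<in> Ao n \<and> 1 \<le> Io n j \<and> Io n j \<le> Io n i"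
  using assms
proof (induction "Io n i" arbitrary: i rule: less_induct)
  case less
  have u: "Io n i \<noteq> 0 \<and> (j = i \<or> (\<exists>i'. callv p pd [c, i] i' \<and> callv p (nEN pre) [c, i'] j))"
    using EN_unf[OF less.prems(1)] less.prems(2) by simp
  show ?case
  proof (cases "j = i")
    case True then show ?thesis using u less.prems by auto
  next
    case False
    then obtain i' where i': "callv p pd [c, i] i'" "callv p (nEN pre) [c, i'] j" using u by blast
    have r: "i' \<in> Ao n" "Io n i' = Io n i - 1" using pred_res[OF less.prems(1) _ i'(1)] u by auto
    have "j \<in> Ao n \<and> 1 \<le> Io n j \<and> Io n j \<le> Io n i'" using less.hyps[of i'] r u i'(2) by auto
    then show ?thesis using r by auto
  qed
qed

lemma EN_ex:
  assumes "i \<in> Ao n" "1 \<le> m" "m \<le> Io n i"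
  shows "\<exists>j. callv p (nEN pre) [c, i] j \<and> Io n j = m"
  using assms
proof (induction "Io n i" arbitrary: i rule: less_induct)
  case less
  show ?case
  proof (cases "m = Io n i")
    case True then show ?thesis using EN_unf[OF less.prems(1)] less.prems by auto
  next
    case False
    have nz: "Io n i \<noteq> 0" using less.prems by auto
    obtain i' where i': "callv p pd [c, i] i'" using pred_ex[OF less.prems(1) nz] by blast
    have r: "i' \<in> Ao n" "Io n i' = Io n i - 1" using pred_res[OF less.prems(1) nz i'] by auto
    have mi: "m \<le> Io n i'" using r less.prems False by auto
    have lt: "Io n i' < Io n i" using r nz by auto
    obtain j where j: "callv p (nEN pre) [c, i'] j" "Io n j = m"
      using less.hyps[OF lt r(1) less.prems(2) mi] by blast
    then show ?thesis using EN_unf[OF less.prems(1)] nz i' by blast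
  qed
qed

abbreviation "N \<equiv> P n - 1"
abbreviation "REP \<equiv> rep p (Ao n) (Io n) N"

lemma rep_res: "REP f k \<Longrightarrow> qry p f b j \<Longrightarrow> j \<in> Ao n \<and> 1 \<le> Io n j \<and> Io n j \<le> N \<and> bit k (Io n j - 1) = b"
  unfolding rep_def by blast
lemma rep_ex: "REP f k \<Longrightarrow> 1 \<le> m \<Longrightarrow> m \<le> N \<Longrightarrow> \<exists>j. qry p f (bit k (m - 1)) j \<and> Io n j = m"
  unfolding rep_def by blast

lemma BIT_sem:
  assumes f: "REP f k" and i: "i \<in> Ao n" "1 \<le> Io n i" "Io n i \<le> N"
  shows "callv p (nBIT pre) [c, f, i] w \<longleftrightarrow> w = bv (bit k (Io n i - 1))"
proof (rule callv_new_char[OF cl_BIT], simp, simp)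
  fix \<gamma> assume "map \<gamma> [''c'', ''f'', ''i''] = [c, f, i]"
  then have g1: "\<gamma> ''c'' = c" "\<gamma> ''f'' = f" "\<gamma> ''i'' = i" by auto
  have q: "evl p \<gamma> (cE (nEQ pre) [Var ''c'', Var ''i'', App (Var ''f'') X]) (bv True) \<longleftrightarrow>
           (\<exists>j. qry p f bb j \<and> Io n j = Io n i)" if X: "X = (if bb then TT else FF)" for X bb
  proof -
    have "evl p \<gamma> (cE (nEQ pre) [Var ''c'', Var ''i'', App (Var ''f'') X]) (bv True) \<longleftrightarrow>
          (\<exists>j. qry p f bb j \<and> callv p (nEQ pre) [c, i, j] (bv True))"
      using evl_new[OF cl_EQ, of "[Var ''c'', Var ''i'', App (Var ''f'') X]" \<gamma> "bv True"] X
      by (cases bb) (simp_all add: la2 evl_Var_iff g1 evl_query)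
    also have "\<dots> \<longleftrightarrow> (\<exists>j. qry p f bb j \<and> Io n j = Io n i)"
    proof -
      have "qry p f bb j \<Longrightarrow> callv p (nEQ pre) [c, i, j] (bv True) \<longleftrightarrow> Io n j = Io n i" for j
        using EQ_sem[OF i(1), of j "bv True"] rep_res[OF f, of bb j] by auto
      then show ?thesis by blast
    qed
    finally show ?thesis .
  qed
  have "evl p \<gamma> (bBIT pre) w \<longleftrightarrow>
        ((\<exists>j. qry p f True j \<and> Io n j = Io n i) \<and> w = bv True) \<or>
        ((\<exists>j. qry p f False j \<and> Io n j = Io n i) \<and> w = bv False)"
    unfolding bBIT_def using q[of TT True] q[of FF False]
    by (simp add: evl_Choose_iff evl_If_bv del: foldl_Cons foldl_Nil)
  also have "\<dots> \<longleftrightarrow> w = bv (bit k (Io n i - 1))"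
  proof -
    have "(\<exists>j. qry p f bb j \<and> Io n j = Io n i) \<longleftrightarrow> bit k (Io n i - 1) = bb" for bb
    proof
      assume "\<exists>j. qry p f bb j \<and> Io n j = Io n i"
      then show "bit k (Io n i - 1) = bb" using rep_res[OF f] by force
    next
      assume "bit k (Io n i - 1) = bb"
      then show "\<exists>j. qry p f bb j \<and> Io n j = Io n i" using rep_ex[OF f i(2) i(3)] by blast
    qed
    then show ?thesis by (cases "bit k (Io n i - 1)") auto
  qed
  finally show "evl p \<gamma> (bBIT pre) w \<longleftrightarrow> w = bv (bit k (Io n i - 1))" .
qed

lemma LZ_sem:
  assumes f: "REP f k" and m: "m \<in> Ao n" "Io n m \<le> N"
  shows "callv p (nLZ pre) [c, f, m] w \<longleftrightarrow> w = bv (\<forall>t. 1 \<le> t \<longrightarrow> t \<le> Io n m \<longrightarrow> \<not> bit k (t - 1))"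
  using m
proof (induction "Io n m" arbitrary: m w rule: less_induct)
  case less
  show ?case
  proof (rule callv_new_char[OF cl_LZ], simp, simp)
    fix \<gamma> assume "map \<gamma> [''c'', ''f'', ''m''] = [c, f, m]"
    then have g1: "\<gamma> ''c'' = c" "\<gamma> ''f'' = f" "\<gamma> ''m'' = m" by auto
    show "evl p \<gamma> (bLZ pre pd zd) w \<longleftrightarrow> w = bv (\<forall>t. 1 \<le> t \<longrightarrow> t \<le> Io n m \<longrightarrow> \<not> bit k (t - 1))"
    proof (cases "Io n m = 0")
      case True
      then show ?thesis unfolding bLZ_def using evl_zero_if[OF g1(1) g1(3) less.prems(1)] by simp
    next
      case False
      have e1: "evl p \<gamma> (cE (nBIT pre) [Var ''c'', Var ''f'', Var ''m'']) u \<longleftrightarrow> u = bv (bit k (Io n m - 1))" for u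
      proof -
        have "evl p \<gamma> (cE (nBIT pre) [Var ''c'', Var ''f'', Var ''m'']) u \<longleftrightarrow> callv p (nBIT pre) [c, f, m] u"
          using evl_new[OF cl_BIT, of "[Var ''c'', Var ''f'', Var ''m'']" \<gamma> u] by (simp add: la2 evl_Var_iff g1)
        also have "\<dots> \<longleftrightarrow> u = bv (bit k (Io n m - 1))" using BIT_sem[OF f less.prems(1)] less.prems False by simp
        finally show ?thesis .
      qed
      obtain m' where m': "callv p pd [c, m] m'" using pred_ex[OF less.prems(1) False] by blast
      have r: "m' \<in> Ao n" "Io n m' = Io n m - 1" using pred_res[OF less.prems(1) False] m' by auto
      have e2: "evl p \<gamma> (cE (nLZ pre) [Var ''c'', Var ''f'', cE pd [Var ''c'', Var ''m'']]) u \<longleftrightarrow>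
               u = bv (\<forall>t. 1 \<le> t \<longrightarrow> t \<le> Io n m - 1 \<longrightarrow> \<not> bit k (t - 1))" for u
      proof -
        have "evl p \<gamma> (cE (nLZ pre) [Var ''c'', Var ''f'', cE pd [Var ''c'', Var ''m'']]) u \<longleftrightarrow>
              (\<exists>m'. callv p pd [c, m] m' \<and> callv p (nLZ pre) [c, f, m'] u)"
          using evl_new[OF cl_LZ, of "[Var ''c'', Var ''f'', cE pd [Var ''c'', Var ''m'']]" \<gamma> u]
          by (simp add: la2 evl_Var_iff g1 evl_pred[OF g1(1) g1(3) less.prems(1) False, simplified])
        also have "\<dots> \<longleftrightarrow> u = bv (\<forall>t. 1 \<le> t \<longrightarrow> t \<le> Io n m - 1 \<longrightarrow> \<not> bit k (t - 1))"
        proof -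
          have "callv p pd [c, m] m'' \<Longrightarrow> callv p (nLZ pre) [c, f, m''] u \<longleftrightarrow>
                  u = bv (\<forall>t. 1 \<le> t \<longrightarrow> t \<le> Io n m - 1 \<longrightarrow> \<not> bit k (t - 1))" for m''
          proof -
            assume h: "callv p pd [c, m] m''"
            have r2: "m'' \<in> Ao n" "Io n m'' = Io n m - 1" using pred_res[OF less.prems(1) False h] by auto
            have lt: "Io n m'' < Io n m" using r2 False by auto
            show ?thesis using less.hyps[OF lt r2(1)] r2 less.prems(2) by simp
          qed
          then show ?thesis using m' by blast
        qed
        finally show ?thesis .
      qed
      have eq: "(\<forall>t. 1 \<le> t \<longrightarrow> t \<le> Io n m \<longrightarrow> \<not> bit k (t - 1)) \<longleftrightarrow>
                \<not> bit k (Io n m - 1) \<and> (\<forall>t. 1 \<le> t \<longrightarrow> t \<le> Io n m - 1 \<longrightarrow> \<not> bit k (t - 1))"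
      proof
        assume h: "\<forall>t. 1 \<le> t \<longrightarrow> t \<le> Io n m \<longrightarrow> \<not> bit k (t - 1)"
        show "\<not> bit k (Io n m - 1) \<and> (\<forall>t. 1 \<le> t \<longrightarrow> t \<le> Io n m - 1 \<longrightarrow> \<not> bit k (t - 1))"
          using h False by auto
      next
        assume h: "\<not> bit k (Io n m - 1) \<and> (\<forall>t. 1 \<le> t \<longrightarrow> t \<le> Io n m - 1 \<longrightarrow> \<not> bit k (t - 1))"
        show "\<forall>t. 1 \<le> t \<longrightarrow> t \<le> Io n m \<longrightarrow> \<not> bit k (t - 1)"
        proof (intro allI impI)
          fix t assume t: "1 \<le> t" "t \<le> Io n m"
          show "\<not> bit k (t - 1)"
          proof (cases "t = Io n m")
            case True then show ?thesis using h by simp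
          next
            case False then show ?thesis using h t by auto
          qed
        qed
      qed
      have z: "evl p \<gamma> (bLZ pre pd zd) w \<longleftrightarrow> (Io n m = 0 \<and> evl p \<gamma> TT w) \<or>
          (0 < Io n m \<and> evl p \<gamma> (If (cE (nBIT pre) [Var ''c'', Var ''f'', Var ''m'']) FF
             (cE (nLZ pre) [Var ''c'', Var ''f'', cE pd [Var ''c'', Var ''m'']])) w)"
        unfolding bLZ_def by (rule evl_zero_if[OF g1(1) g1(3) less.prems(1)])
      show ?thesis unfolding z
        by (simp only: evl_If_bv e1 e2 eq evl_TT evl_FF bv_inj) (cases "bit k (Io n m - 1)"; use False in auto)
    qed
  qed
qed

lemma NB_sem:
  assumes f: "REP f k" and j: "j \<in> Ao n" "1 \<le> Io n j" "Io n j \<le> N"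
  shows "callv p (nNB pre) [c, f, j] w \<longleftrightarrow> w = bv (nbit k (Io n j))"
proof (rule callv_new_char[OF cl_NB], simp, simp)
  fix \<gamma> assume "map \<gamma> [''c'', ''f'', ''j''] = [c, f, j]"
  then have g1: "\<gamma> ''c'' = c" "\<gamma> ''f'' = f" "\<gamma> ''j'' = j" by auto
  have nz: "Io n j \<noteq> 0" using j by auto
  have e1: "evl p \<gamma> (cE (nBIT pre) [Var ''c'', Var ''f'', Var ''j'']) u \<longleftrightarrow> u = bv (bit k (Io n j - 1))" for u
  proof -
    have "evl p \<gamma> (cE (nBIT pre) [Var ''c'', Var ''f'', Var ''j'']) u \<longleftrightarrow> callv p (nBIT pre) [c, f, j] u"
      using evl_new[OF cl_BIT, of "[Var ''c'', Var ''f'', Var ''j'']" \<gamma> u] by (simp add: la2 evl_Var_iff g1)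
    also have "\<dots> \<longleftrightarrow> u = bv (bit k (Io n j - 1))" using BIT_sem[OF f j] by simp
    finally show ?thesis .
  qed
  obtain j' where j': "callv p pd [c, j] j'" using pred_ex[OF j(1) nz] by blast
  have e2: "evl p \<gamma> (cE (nLZ pre) [Var ''c'', Var ''f'', cE pd [Var ''c'', Var ''j'']]) u \<longleftrightarrow>
               u = bv (\<forall>t. 1 \<le> t \<longrightarrow> t \<le> Io n j - 1 \<longrightarrow> \<not> bit k (t - 1))" for u
  proof -
    have "evl p \<gamma> (cE (nLZ pre) [Var ''c'', Var ''f'', cE pd [Var ''c'', Var ''j'']]) u \<longleftrightarrow>
          (\<exists>m'. callv p pd [c, j] m' \<and> callv p (nLZ pre) [c, f, m'] u)"
      using evl_new[OF cl_LZ, of "[Var ''c'', Var ''f'', cE pd [Var ''c'', Var ''j'']]" \<gamma> u]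
      by (simp add: la2 evl_Var_iff g1 evl_pred[OF g1(1) g1(3) j(1) nz, simplified])
    also have "\<dots> \<longleftrightarrow> u = bv (\<forall>t. 1 \<le> t \<longrightarrow> t \<le> Io n j - 1 \<longrightarrow> \<not> bit k (t - 1))"
    proof -
      have "callv p pd [c, j] m'' \<Longrightarrow> callv p (nLZ pre) [c, f, m''] u \<longleftrightarrow>
              u = bv (\<forall>t. 1 \<le> t \<longrightarrow> t \<le> Io n j - 1 \<longrightarrow> \<not> bit k (t - 1))" for m''
      proof -
        assume h: "callv p pd [c, j] m''"
        have r2: "m'' \<in> Ao n" "Io n m'' = Io n j - 1" using pred_res[OF j(1) nz h] by auto
        show ?thesis using LZ_sem[OF f r2(1)] r2 j by simp
      qed
      then show ?thesis using j' by blast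
    qed
    finally show ?thesis .
  qed
  show "evl p \<gamma> (bNB pre pd) w \<longleftrightarrow> w = bv (nbit k (Io n j))"
    unfolding bNB_def nbit_def
    by (simp only: evl_If_bv e1 e2 evl_TT evl_FF bv_inj) auto
qed

lemma P2_sem:
  assumes f: "REP f k" and j: "j \<in> Ao n" "1 \<le> Io n j" "Io n j \<le> N"
  shows "callv p (nP2 pre) [c, f, bv b, j] w \<longleftrightarrow> nbit k (Io n j) = b \<and> w = j"
proof (rule callv_new_char[OF cl_P2], simp, simp)
  fix \<gamma> assume "map \<gamma> [''c'', ''f'', ''b'', ''j''] = [c, f, bv b, j]"
  then have g1: "\<gamma> ''c'' = c" "\<gamma> ''f'' = f" "\<gamma> ''b'' = bv b" "\<gamma> ''j'' = j" by auto
  have e1: "evl p \<gamma> (cE (nNB pre) [Var ''c'', Var ''f'', Var ''j'']) u \<longleftrightarrow> u = bv (nbit k (Io n j))" for u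
  proof -
    have "evl p \<gamma> (cE (nNB pre) [Var ''c'', Var ''f'', Var ''j'']) u \<longleftrightarrow> callv p (nNB pre) [c, f, j] u"
      using evl_new[OF cl_NB, of "[Var ''c'', Var ''f'', Var ''j'']" \<gamma> u] by (simp add: la2 evl_Var_iff g1)
    also have "\<dots> \<longleftrightarrow> u = bv (nbit k (Io n j))" using NB_sem[OF f j] by simp
    finally show ?thesis .
  qed
  show "evl p \<gamma> (bP2 pre) w \<longleftrightarrow> nbit k (Io n j) = b \<and> w = j"
    unfolding bP2_def
    by (simp only: evl_If_bv e1 evl_Var_iff g1 bv_inj evl_FAIL) auto
qed

lemma EN_seed:
  assumes "\<gamma> ''c'' = c"
  shows "evl p \<gamma> (cE (nEN pre) [Var ''c'', cE sd [Var ''c'']]) j \<longleftrightarrow>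
           (\<exists>s0. callv p sd [c] s0 \<and> callv p (nEN pre) [c, s0] j)"
  using evl_new[OF cl_EN, of "[Var ''c'', cE sd [Var ''c'']]" \<gamma> j]
  by (simp add: la2 evl_Var_iff assms evl_seed[where \<gamma>=\<gamma>, OF assms, simplified])

lemma seed_EN:
  assumes "callv p sd [c] s0" "callv p (nEN pre) [c, s0] j"
  shows "j \<in> Ao n \<and> 1 \<le> Io n j \<and> Io n j \<le> N"
  using seed_res[OF assms(1)] EN_res[of s0 j] assms(2) by auto

lemma PR_qry:
  assumes f: "REP f k"
  shows "qry p (VFun (nPR pre) [c, f]) b w \<longleftrightarrow>
           (\<exists>s0. callv p sd [c] s0 \<and> callv p (nEN pre) [c, s0] w) \<and> nbit k (Io n w) = b"
proof -
  have "qry p (VFun (nPR pre) [c, f]) b w \<longleftrightarrow> callv p (nPR pre) [c, f, bv b] w"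
    by (simp add: qry_def)
  also have "\<dots> \<longleftrightarrow> (\<exists>s0. callv p sd [c] s0 \<and> callv p (nEN pre) [c, s0] w) \<and> nbit k (Io n w) = b"
  proof (rule callv_new_char[OF cl_PR], simp, simp)
    fix \<gamma> assume "map \<gamma> [''c'', ''f'', ''b''] = [c, f, bv b]"
    then have g1: "\<gamma> ''c'' = c" "\<gamma> ''f'' = f" "\<gamma> ''b'' = bv b" by auto
    have "evl p \<gamma> (bPR pre sd) w \<longleftrightarrow>
          (\<exists>j. (\<exists>s0. callv p sd [c] s0 \<and> callv p (nEN pre) [c, s0] j) \<and> callv p (nP2 pre) [c, f, bv b, j] w)"
      unfolding bPR_def
      using evl_new[OF cl_P2, of "[Var ''c'', Var ''f'', Var ''b'', cE (nEN pre) [Var ''c'', cE sd [Var ''c'']]]" \<gamma> w]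
      by (simp add: la2 evl_Var_iff g1 EN_seed[where \<gamma>=\<gamma>, OF g1(1), simplified])
    also have "\<dots> \<longleftrightarrow> (\<exists>s0. callv p sd [c] s0 \<and> callv p (nEN pre) [c, s0] w) \<and> nbit k (Io n w) = b"
    proof -
      have "(\<exists>s0. callv p sd [c] s0 \<and> callv p (nEN pre) [c, s0] j) \<Longrightarrow>
            callv p (nP2 pre) [c, f, bv b, j] w \<longleftrightarrow> nbit k (Io n j) = b \<and> w = j" for j
        using P2_sem[OF f] seed_EN by blast
      then show ?thesis by blast
    qed
    finally show "evl p \<gamma> (bPR pre sd) w \<longleftrightarrow>
          (\<exists>s0. callv p sd [c] s0 \<and> callv p (nEN pre) [c, s0] w) \<and> nbit k (Io n w) = b" .
  qed
  finally show ?thesis .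
qed

lemma PR_rep:
  assumes f: "REP f k" and k: "0 < k"
  shows "REP (VFun (nPR pre) [c, f]) (k - 1)"
  unfolding rep_def
proof (intro allI conjI impI)
  fix b j assume q: "qry p (VFun (nPR pre) [c, f]) b j"
  then obtain s0 where s0: "callv p sd [c] s0" "callv p (nEN pre) [c, s0] j" "nbit k (Io n j) = b"
    using PR_qry[OF f] by blast
  have r: "j \<in> Ao n \<and> 1 \<le> Io n j \<and> Io n j \<le> N" using seed_EN[OF s0(1,2)] .
  then show "j \<in> Ao n" "1 \<le> Io n j" "Io n j \<le> N" by auto
  show "bit (k - 1) (Io n j - 1) = b" using s0(3) nbit_dec[OF k] r by simp
next
  fix b m assume m: "1 \<le> m" "m \<le> N" "bit (k - 1) (m - 1) = b"
  obtain s0 where s0: "callv p sd [c] s0" using seed_ex by blast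
  have sr: "s0 \<in> Ao n" "Io n s0 = N" using seed_res[OF s0] by auto
  obtain j where j: "callv p (nEN pre) [c, s0] j" "Io n j = m" using EN_ex[OF sr(1) m(1)] m sr by auto
  have "qry p (VFun (nPR pre) [c, f]) b j" using PR_qry[OF f] s0 j nbit_dec[OF k m(1)] m by auto
  then show "\<exists>j. qry p (VFun (nPR pre) [c, f]) b j \<and> Io n j = m" using j by blast
qed

lemma SD_qry:
  "qry p (VFun (nSD pre) [c]) b w \<longleftrightarrow> b \<and> (\<exists>s0. callv p sd [c] s0 \<and> callv p (nEN pre) [c, s0] w)"
proof -
  have "qry p (VFun (nSD pre) [c]) b w \<longleftrightarrow> callv p (nSD pre) [c, bv b] w"
    by (simp add: qry_def)
  also have "\<dots> \<longleftrightarrow> b \<and> (\<exists>s0. callv p sd [c] s0 \<and> callv p (nEN pre) [c, s0] w)"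
  proof (rule callv_new_char[OF cl_SD], simp, simp)
    fix \<gamma> assume "map \<gamma> [''c'', ''b''] = [c, bv b]"
    then have g1: "\<gamma> ''c'' = c" "\<gamma> ''b'' = bv b" by auto
    show "evl p \<gamma> (bSD pre sd) w \<longleftrightarrow> b \<and> (\<exists>s0. callv p sd [c] s0 \<and> callv p (nEN pre) [c, s0] w)"
      unfolding bSD_def using EN_seed[where \<gamma>=\<gamma>, OF g1(1)]
      by (simp only: evl_If_bv evl_Var_iff g1 bv_inj evl_FAIL) auto
  qed
  finally show ?thesis .
qed

lemma SD_rep: "REP (VFun (nSD pre) [c]) (2 ^ N - 1)"
  unfolding rep_def
proof (intro allI conjI impI)
  fix b j assume q: "qry p (VFun (nSD pre) [c]) b j"
  then obtain s0 where s0: "b" "callv p sd [c] s0" "callv p (nEN pre) [c, s0] j"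
    using SD_qry by blast
  have r: "j \<in> Ao n \<and> 1 \<le> Io n j \<and> Io n j \<le> N" using seed_EN[OF s0(2,3)] .
  then show "j \<in> Ao n" "1 \<le> Io n j" "Io n j \<le> N" by auto
  show "bit (2 ^ N - 1 :: nat) (Io n j - 1) = b" using r s0(1) bit_mask_nat[of N "Io n j - 1"] by auto
next
  fix b m assume m: "1 \<le> m" "m \<le> N" "bit (2 ^ N - 1 :: nat) (m - 1) = b"
  then have b: b using bit_mask_nat[of N "m - 1"] by auto
  obtain s0 where s0: "callv p sd [c] s0" using seed_ex by blast
  have sr: "s0 \<in> Ao n" "Io n s0 = N" using seed_res[OF s0] by auto
  obtain j where j: "callv p (nEN pre) [c, s0] j" "Io n j = m" using EN_ex[OF sr(1) m(1)] m sr by auto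
  then show "\<exists>j. qry p (VFun (nSD pre) [c]) b j \<and> Io n j = m" using SD_qry b s0 by blast
qed

lemma ZR_sem:
  assumes f: "REP f k" and k: "k < 2 ^ N"
  shows "callv p (nZR pre) [c, f] w \<longleftrightarrow> w = bv (k = 0)"
proof (rule callv_new_char[OF cl_ZR], simp, simp)
  fix \<gamma> assume "map \<gamma> [''c'', ''f''] = [c, f]"
  then have g1: "\<gamma> ''c'' = c" "\<gamma> ''f'' = f" by auto
  obtain s0 where s0: "callv p sd [c] s0" using seed_ex by blast
  have "evl p \<gamma> (bZR pre sd) w \<longleftrightarrow> (\<exists>s0. callv p sd [c] s0 \<and> callv p (nLZ pre) [c, f, s0] w)"
    unfolding bZR_def
    using evl_new[OF cl_LZ, of "[Var ''c'', Var ''f'', cE sd [Var ''c'']]" \<gamma> w]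
    by (simp add: la2 evl_Var_iff g1 evl_seed[where \<gamma>=\<gamma>, OF g1(1), simplified])
  also have "\<dots> \<longleftrightarrow> w = bv (\<forall>t. 1 \<le> t \<longrightarrow> t \<le> N \<longrightarrow> \<not> bit k (t - 1))"
  proof -
    have "callv p sd [c] s1 \<Longrightarrow> callv p (nLZ pre) [c, f, s1] w \<longleftrightarrow>
            w = bv (\<forall>t. 1 \<le> t \<longrightarrow> t \<le> N \<longrightarrow> \<not> bit k (t - 1))" for s1
      using LZ_sem[OF f] seed_res by auto
    then show ?thesis using s0 by blast
  qed
  also have "(\<forall>t. 1 \<le> t \<longrightarrow> t \<le> N \<longrightarrow> \<not> bit k (t - 1)) \<longleftrightarrow> (\<forall>i<N. \<not> bit k i)"
  proof
    assume h: "\<forall>t. 1 \<le> t \<longrightarrow> t \<le> N \<longrightarrow> \<not> bit k (t - 1)"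
    show "\<forall>i<N. \<not> bit k i"
    proof (intro allI impI)
      fix i assume "i < N" then show "\<not> bit k i" using h[rule_format, of "Suc i"] by simp
    qed
  next
    assume "\<forall>i<N. \<not> bit k i" then show "\<forall>t. 1 \<le> t \<longrightarrow> t \<le> N \<longrightarrow> \<not> bit k (t - 1)" by auto
  qed
  also have "\<dots> \<longleftrightarrow> k = 0" using all_zero_bits[OF k] .
  finally show "evl p \<gamma> (bZR pre sd) w \<longleftrightarrow> w = bv (k = 0)" .
qed

end
end


fun tinf :: "csig \<Rightarrow> (string \<Rightarrow> ty) \<Rightarrow> (string \<Rightarrow> ty) \<Rightarrow> expr \<Rightarrow> ty option" where
  "tinf \<Sigma> FT \<Gamma> (Var x) = Some (\<Gamma> x)"
| "tinf \<Sigma> FT \<Gamma> (Fun f) = Some (FT f)"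
| "tinf \<Sigma> FT \<Gamma> (ConApp c ss) = (if ss = [] then (case csig_of \<Sigma> c of
       Some (tys, s) \<Rightarrow> if tys = [] then Some (TBase s) else None | None \<Rightarrow> None) else None)"
| "tinf \<Sigma> FT \<Gamma> (App a b) = (case tinf \<Sigma> FT \<Gamma> a of
       Some (TArr t1 t2) \<Rightarrow> (if tinf \<Sigma> FT \<Gamma> b = Some t1 then Some t2 else None) | _ \<Rightarrow> None)"
| "tinf \<Sigma> FT \<Gamma> (If a b c) = None"
| "tinf \<Sigma> FT \<Gamma> (Choose ss) = None"
| "tinf \<Sigma> FT \<Gamma> (Pair a b) = None"

fun tchk :: "csig \<Rightarrow> (string \<Rightarrow> ty) \<Rightarrow> (string \<Rightarrow> ty) \<Rightarrow> expr \<Rightarrow> ty \<Rightarrow> bool" where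
  "tchk \<Sigma> FT \<Gamma> (If a b c) t = (tchk \<Sigma> FT \<Gamma> a (TBase SBool) \<and> tchk \<Sigma> FT \<Gamma> b t \<and> tchk \<Sigma> FT \<Gamma> c t)"
| "tchk \<Sigma> FT \<Gamma> (Choose ss) t = (\<forall>s\<in>set ss. tchk \<Sigma> FT \<Gamma> s t)"
| "tchk \<Sigma> FT \<Gamma> (Var x) t = (tinf \<Sigma> FT \<Gamma> (Var x) = Some t)"
| "tchk \<Sigma> FT \<Gamma> (Fun x) t = (tinf \<Sigma> FT \<Gamma> (Fun x) = Some t)"
| "tchk \<Sigma> FT \<Gamma> (ConApp x y) t = (tinf \<Sigma> FT \<Gamma> (ConApp x y) = Some t)"
| "tchk \<Sigma> FT \<Gamma> (App x y) t = (tinf \<Sigma> FT \<Gamma> (App x y) = Some t)"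
| "tchk \<Sigma> FT \<Gamma> (Pair x y) t = False"

lemma tinf_sound: "tinf \<Sigma> FT \<Gamma> e = Some t \<Longrightarrow> typed \<Sigma> FT \<Gamma> e t"
proof (induction \<Sigma> FT \<Gamma> e arbitrary: t rule: tinf.induct)
  case (1 \<Sigma> FT \<Gamma> x) then show ?case by (auto intro: typed.intros)
next
  case (2 \<Sigma> FT \<Gamma> f) then show ?case by (auto intro: typed.intros)
next
  case (3 \<Sigma> FT \<Gamma> c ss)
  then show ?case by (auto intro!: typed.intros split: if_splits option.splits)
next
  case (4 \<Sigma> FT \<Gamma> a b)
  then show ?case by (auto intro: typed.intros split: if_splits option.splits ty.splits)
qed auto

lemma tchk_sound: "tchk \<Sigma> FT \<Gamma> e t \<Longrightarrow> typed \<Sigma> FT \<Gamma> e t"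
proof (induction \<Sigma> FT \<Gamma> e t rule: tchk.induct)
  case (1 \<Sigma> FT \<Gamma> a b c t) then show ?case by (auto intro: typed.intros)
next
  case (2 \<Sigma> FT \<Gamma> ss t) then show ?case by (auto intro: typed.intros)
qed (auto intro: tinf_sound)

lemma funs_pat[simp]: "funs (pat_expr l) = {}"
  by (induction l) auto

lemma funs_foldl: "funs (foldl App e es) = funs e \<union> \<Union>(funs ` set es)"
  by (induction es arbitrary: e) auto

lemma finite_funs: "finite (funs e)"
  by (induction e) auto

lemma typed_FT_cong:
  "typed \<Sigma> FT \<Gamma> e t \<Longrightarrow> (\<forall>f\<in>funs e. FT' f = FT f) \<Longrightarrow> typed \<Sigma> FT' \<Gamma> e t"
proof (induction rule: typed.induct)
  case (T_Fun f) then show ?case using typed.T_Fun[of \<Sigma> FT' \<Gamma> f] by simp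
next
  case (T_Con c tys s ss)
  have "list_all2 (typed \<Sigma> FT' \<Gamma>) ss tys"
    unfolding list_all2_conv_all_nth
  proof (intro conjI allI impI)
    show "length ss = length tys" using T_Con by (simp add: list_all2_conv_all_nth)
    fix i assume i: "i < length ss"
    then have "ss ! i \<in> set ss" by simp
    then have "\<forall>f\<in>funs (ss ! i). FT' f = FT f" using T_Con.prems by auto
    then show "typed \<Sigma> FT' \<Gamma> (ss ! i) (tys ! i)" using T_Con.IH i by (auto simp: list_all2_conv_all_nth)
  qed
  then show ?case using T_Con by (auto intro: typed.intros)
qed (auto intro: typed.intros)

lemma vtyped_vsyms: "vtyped \<Sigma> FT p v t \<Longrightarrow> vsyms v \<subseteq> fst ` set p"
proof (induction rule: vtyped.induct)
  case (V_Con c tys s vs)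
  then show ?case by (fastforce simp: list_all2_conv_all_nth in_set_conv_nth)
next
  case (V_Pair v t1 w t2) then show ?case by simp
next
  case (V_Fun vs f tys t)
  have "arity p f \<noteq> 0" using V_Fun by simp
  then obtain cl where "find (\<lambda>cl. fst cl = f) p = Some cl" by (auto simp: arity_def split: option.splits)
  then have "f \<in> fst ` set p" by (auto simp: find_Some_iff)
  moreover have "\<forall>v\<in>set vs. vsyms v \<subseteq> fst ` set p"
    using V_Fun by (fastforce simp: list_all2_conv_all_nth in_set_conv_nth)
  ultimately show ?case by auto
qed

lemma vtyped_bool: "vtyped \<Sigma> FT p (VCon (if b then CTrue else CFalse) []) (TBase SBool)"
  by (cases b) (auto intro: vtyped.intros)

lemma vtyped_blist: "vtyped \<Sigma> FT p (blist cs) (TBase SList)"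
proof (induction cs)
  case Nil then show ?case by (auto intro: vtyped.intros)
next
  case (Cons b cs)
  have "list_all2 (vtyped \<Sigma> FT p) [VCon (if b then CTrue else CFalse) [], blist cs] [TBase SBool, TBase SList]"
    using vtyped_bool[of \<Sigma> FT p b] Cons by simp
  then show ?case by (simp add: vtyped.V_Con[where tys = "[TBase SBool, TBase SList]"])
qed

lemma vsyms_blist[simp]: "vsyms (blist cs) = {}"
  by (induction cs) auto


abbreviation "tL \<equiv> TBase SList"
abbreviation "tB \<equiv> TBase SBool"

definition newFT :: "string \<Rightarrow> ty \<Rightarrow> (string \<Rightarrow> ty) \<Rightarrow> string \<Rightarrow> ty" where
  "newFT pre a FT = FT(
     nEQ pre := TArr tL (TArr a (TArr a tB)),
     nEN pre := TArr tL (TArr a a),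
     nBIT pre := TArr tL (TArr (TArr tB a) (TArr a tB)),
     nLZ pre := TArr tL (TArr (TArr tB a) (TArr a tB)),
     nNB pre := TArr tL (TArr (TArr tB a) (TArr a tB)),
     nP2 pre := TArr tL (TArr (TArr tB a) (TArr tB (TArr a a))),
     nPR pre := TArr tL (TArr (TArr tB a) (TArr tB a)),
     nSD pre := TArr tL (TArr tB a),
     nZR pre := TArr tL (TArr (TArr tB a) tB))"

definition G0 :: "ty \<Rightarrow> string \<Rightarrow> ty" where
  "G0 a x = (if x = ''c'' then tL else if x = ''f'' then TArr tB a else if x = ''b'' then tB else a)"

definition newnames :: "string \<Rightarrow> string set" where
  "newnames pre = {nEQ pre, nEN pre, nBIT pre, nLZ pre, nNB pre, nP2 pre, nPR pre, nSD pre, nZR pre}"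

lemma newprog_names: "fst ` set (newprog pre sd pd zd) = newnames pre"
  by (auto simp: newprog_def newnames_def)

lemma newnames_distinct: "distinct (map fst (newprog pre sd pd zd))"
  by (simp add: newprog_def nEQ_def nEN_def nBIT_def nLZ_def nNB_def nP2_def nPR_def nSD_def nZR_def)

lemma newFT_old: "g \<notin> newnames pre \<Longrightarrow> newFT pre a FT g = FT g"
  by (simp add: newFT_def newnames_def)

lemma newFT_vals:
  "newFT pre a FT (nEQ pre) = TArr tL (TArr a (TArr a tB))"
  "newFT pre a FT (nEN pre) = TArr tL (TArr a a)"
  "newFT pre a FT (nBIT pre) = TArr tL (TArr (TArr tB a) (TArr a tB))"
  "newFT pre a FT (nLZ pre) = TArr tL (TArr (TArr tB a) (TArr a tB))"
  "newFT pre a FT (nNB pre) = TArr tL (TArr (TArr tB a) (TArr a tB))"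
  "newFT pre a FT (nP2 pre) = TArr tL (TArr (TArr tB a) (TArr tB (TArr a a)))"
  "newFT pre a FT (nPR pre) = TArr tL (TArr (TArr tB a) (TArr tB a))"
  "newFT pre a FT (nSD pre) = TArr tL (TArr tB a)"
  "newFT pre a FT (nZR pre) = TArr tL (TArr (TArr tB a) tB)"
  by (simp_all add: newFT_def nEQ_def nEN_def nBIT_def nLZ_def nNB_def nP2_def nPR_def nSD_def nZR_def)

lemma new_typed:
  assumes "sd \<notin> newnames pre" "pd \<notin> newnames pre" "zd \<notin> newnames pre"
    and "FT sd = TArr tL a" "FT pd = TArr tL (TArr a a)" "FT zd = TArr tL (TArr a tB)"
  shows "\<forall>cl\<in>set (newprog pre sd pd zd). \<exists>t. typed \<Sigma> (newFT pre a FT) (G0 a) (lhs_expr (fst cl) (fst (snd cl))) t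
            \<and> typed \<Sigma> (newFT pre a FT) (G0 a) (snd (snd cl)) t"
proof -
  have ft: "newFT pre a FT sd = TArr tL a" "newFT pre a FT pd = TArr tL (TArr a a)"
      "newFT pre a FT zd = TArr tL (TArr a tB)"
    using assms newFT_old by auto
  have dn: "distinct [nEQ pre, nEN pre, nBIT pre, nLZ pre, nNB pre, nP2 pre, nPR pre, nSD pre, nZR pre]"
    by (simp add: nEQ_def nEN_def nBIT_def nLZ_def nNB_def nP2_def nPR_def nSD_def nZR_def)
  have "\<forall>cl\<in>set (newprog pre sd pd zd). \<exists>t. tchk \<Sigma> (newFT pre a FT) (G0 a) (lhs_expr (fst cl) (fst (snd cl))) t
            \<and> tchk \<Sigma> (newFT pre a FT) (G0 a) (snd (snd cl)) t"
    by (simp add: newprog_def lhs_expr_def ft G0_def newFT_vals bEQ_def bEN_def bBIT_def bLZ_def bNB_def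
       bP2_def bPR_def bSD_def bZR_def TT_def FF_def FAIL_def)
  then show ?thesis using tchk_sound by blast
qed

lemma G0_ok: "ty_over S a \<Longrightarrow> ord a \<le> 1 \<Longrightarrow> SBool \<in> S \<Longrightarrow> SList \<in> S \<Longrightarrow>
   ty_over S (G0 a x) \<and> ord (G0 a x) \<le> 1"
  by (auto simp: G0_def ty_over_def)

lemma new_clause_props:
  "\<forall>cl\<in>set (newprog pre sd pd zd). distinct (concat (map pvars (fst (snd cl)))) \<and>
      fvars (snd (snd cl)) \<subseteq> set (concat (map pvars (fst (snd cl)))) \<and>
      funs (snd (snd cl)) \<subseteq> newnames pre \<union> {sd, pd, zd} \<and> cons_free cl"
  by (auto simp: newprog_def newnames_def bEQ_def bEN_def bBIT_def bLZ_def bNB_def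
       bP2_def bPR_def bSD_def bZR_def TT_def FF_def FAIL_def cons_free_def subexpr_def)

lemma typed_App_inv: "typed \<Sigma> FT \<Gamma> (App a b) t \<Longrightarrow> \<exists>t1. typed \<Sigma> FT \<Gamma> a (TArr t1 t) \<and> typed \<Sigma> FT \<Gamma> b t1"
  by (erule typed.cases) auto
lemma typed_Fun_inv: "typed \<Sigma> FT \<Gamma> (Fun f) t \<Longrightarrow> t = FT f"
  by (erule typed.cases) auto
lemma typed_Var_inv: "typed \<Sigma> FT \<Gamma> (Var x) t \<Longrightarrow> t = \<Gamma> x"
  by (erule typed.cases) auto
lemma typed_Con_inv: "typed \<Sigma> FT \<Gamma> (ConApp c ss) t \<Longrightarrow> \<exists>s. t = TBase s"
  by (erule typed.cases) auto

lemma ord_alpha: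
  assumes c: "callv po zd [v1, v2] (VCon b [])"
    and ty: "\<forall>cl\<in>set po. clause_typable S \<Sigma> FT K cl"
    and ft: "FT zd = TArr tL (TArr a tB)"
  shows "ord a \<le> K"
  using c
proof (cases rule: callv.cases)
  case (C_Clause i ls s \<gamma>)
  then obtain l1 l2 where ls: "ls = [l1, l2]" by (auto simp: map_eq_Cons_conv)
  have "(zd, ls, s) \<in> set po" using C_Clause by (metis nth_mem)
  then obtain \<Gamma> t where G: "\<forall>x\<in>set (concat (map pvars ls)). ty_over S (\<Gamma> x) \<and> ord (\<Gamma> x) \<le> K"
     and T: "typed \<Sigma> FT \<Gamma> (lhs_expr zd ls) t"
    using ty unfolding clause_typable_def by fastforce
  have "typed \<Sigma> FT \<Gamma> (App (App (Fun zd) (pat_expr l1)) (pat_expr l2)) t"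
    using T ls by (simp add: lhs_expr_def)
  then obtain t1 t2 where "typed \<Sigma> FT \<Gamma> (Fun zd) (TArr t2 (TArr t1 t))" "typed \<Sigma> FT \<Gamma> (pat_expr l2) t1"
    by (blast dest: typed_App_inv)
  then have l2: "typed \<Sigma> FT \<Gamma> (pat_expr l2) a" using ft by (auto dest: typed_Fun_inv)
  show ?thesis
  proof (cases l2)
    case (PVar x)
    then have "a = \<Gamma> x" using l2 by (auto dest: typed_Var_inv)
    moreover have "x \<in> set (concat (map pvars ls))" using PVar ls by simp
    ultimately show ?thesis using G by auto
  next
    case (PCon c' ls')
    then show ?thesis using l2 by (auto dest: typed_Con_inv)
  qed
qed

lemma rep_unique:
  assumes "rep p A I N v k" "rep p A I N v k'" "k < 2 ^ N" "k' < 2 ^ N"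
  shows "k = k'"
proof (rule bits_eq[OF assms(3,4)], intro allI impI)
  fix i assume i: "i < N"
  obtain j where j: "qry p v (bit k i) j" "I j = Suc i"
    using assms(1) i unfolding rep_def by (metis Suc_leI diff_Suc_1 le_add1 plus_1_eq_Suc)
  then show "bit k i = bit k' i" using assms(2) unfolding rep_def by (metis diff_Suc_1)
qed


lemma distinct_fst_eq: "distinct (map fst xs) \<Longrightarrow> x \<in> set xs \<Longrightarrow> y \<in> set xs \<Longrightarrow> fst x = fst y \<Longrightarrow> x = y"
  by (metis distinct_map inj_onD)

lemma clause_typable_mono: "K \<le> K' \<Longrightarrow> clause_typable S \<Sigma> FT K cl \<Longrightarrow> clause_typable S \<Sigma> FT K' cl"
  unfolding clause_typable_def by (auto split: prod.splits) (meson order_trans)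

lemma funs_lhs: "funs (lhs_expr f ls) = {f}"
  by (simp add: lhs_expr_def funs_foldl)

lemma clause_typable_FT:
  assumes "clause_typable S \<Sigma> FT K cl" "\<forall>g\<in>funs (lhs_expr (fst cl) (fst (snd cl))) \<union> funs (snd (snd cl)). FT' g = FT g"
  shows "clause_typable S \<Sigma> FT' K cl"
  using assms unfolding clause_typable_def
  by (auto split: prod.splits intro: typed_FT_cong)

theorem lemma10:
  fixes S :: "sort set" and \<Sigma> :: csig and P :: "nat \<Rightarrow> nat"
  assumes "wf_sig S \<Sigma>"
    and "\<forall>n. P n > 0"
    and "\<exists>M K. K \<le> 1 \<and> counting_module S \<Sigma> P M \<and> data_order S \<Sigma> (ftype M) K (prog M)"
  shows "\<exists>M. counting_module S \<Sigma> (\<lambda>n. 2 ^ (P n - 1)) M \<and> data_order S \<Sigma> (ftype M) 1 (prog M)"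
proof -
  obtain M K where K: "K \<le> 1" and cm: "counting_module S \<Sigma> P M"
    and dord: "data_order S \<Sigma> (ftype M) K (prog M)"
    using assms(3) by blast
  define po where "po = prog M"
  define sd where "sd = seed M"
  define pd where "pd = pred M"
  define zd where "zd = zero M"
  define a where "a = alpha M"
  define FTo where "FTo = ftype M"
  define Do where "Do = dsyms M"
  define Ao where "Ao = avals M"
  define Io where "Io = interp M"
  have wfs: "SBool \<in> S" "SList \<in> S" using assms(1) by (auto simp: wf_sig_def)
  note cmU = cm[unfolded counting_module_def Let_def]
  note c2 = cmU[THEN conjunct2]
  note c3 = c2[THEN conjunct2]
  note c4 = c3[THEN conjunct2]
  note c5 = c4[THEN conjunct2]
  note c6 = c5[THEN conjunct2]
  note c7 = c6[THEN conjunct2]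
  note c8 = c7[THEN conjunct2]
  note c9 = c8[THEN conjunct2]
  note c10 = c9[THEN conjunct2]
  have cm1: "distinct [sd, pd, zd]" "{sd, pd, zd} \<subseteq> Do" "ty_over S a" "\<forall>f\<in>Do. ty_over S (FTo f)"
     "FTo sd = TArr tL a" "FTo pd = TArr tL (TArr a a)" "FTo zd = TArr tL (TArr a tB)"
     "wf_prog S \<Sigma> FTo Do po" "\<forall>n. \<forall>v\<in>Ao n. vtyped \<Sigma> FTo po v a \<and> vsyms v \<subseteq> Do"
    unfolding sd_def pd_def zd_def a_def FTo_def Do_def po_def Ao_def
    by (rule cmU[THEN conjunct1] c2[THEN conjunct1] c3[THEN conjunct1] c4[THEN conjunct1]
          c5[THEN conjunct1] c6[THEN conjunct1] c7[THEN conjunct1] c8[THEN conjunct1] c9[THEN conjunct1])+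
  have cm2: "(\<exists>!v. callv po sd [blist cs] v) \<and>
      (\<forall>v. callv po sd [blist cs] v \<longrightarrow> v \<in> Ao (length cs) \<and> Io (length cs) v = P (length cs) - 1) \<and>
      (\<forall>v\<in>Ao (length cs). Io (length cs) v > 0 \<longrightarrow>
         (\<exists>!w. callv po pd [blist cs, v] w) \<and>
         (\<forall>w. callv po pd [blist cs, v] w \<longrightarrow> w \<in> Ao (length cs) \<and> Io (length cs) w = Io (length cs) v - 1)) \<and>
      (\<forall>v\<in>Ao (length cs).
         (callv po zd [blist cs, v] (VCon CTrue []) \<longleftrightarrow> Io (length cs) v = 0) \<and>
         (callv po zd [blist cs, v] (VCon CFalse []) \<longleftrightarrow> Io (length cs) v > 0))" for cs
    unfolding sd_def pd_def zd_def po_def Ao_def Io_def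
    by (rule c10[rule_format, of cs])
  have cmA: "\<exists>v. callv po sd [blist cs] v" for cs using cm2[of cs] by blast
  have cmB: "callv po sd [blist cs] v \<Longrightarrow> v \<in> Ao (length cs) \<and> Io (length cs) v = P (length cs) - 1" for cs v
    using cm2[of cs, THEN conjunct2, THEN conjunct1] by blast
  have cmC: "v \<in> Ao (length cs) \<Longrightarrow> Io (length cs) v > 0 \<Longrightarrow>
         (\<exists>w. callv po pd [blist cs, v] w) \<and>
         (\<forall>w. callv po pd [blist cs, v] w \<longrightarrow> w \<in> Ao (length cs) \<and> Io (length cs) w = Io (length cs) v - 1)"
    for cs v using cm2[of cs, THEN conjunct2, THEN conjunct2, THEN conjunct1] by blast
  have cmD: "v \<in> Ao (length cs) \<Longrightarrow>
         (callv po zd [blist cs, v] (VCon CTrue []) \<longleftrightarrow> Io (length cs) v = 0) \<and>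
         (callv po zd [blist cs, v] (VCon CFalse []) \<longleftrightarrow> Io (length cs) v > 0)"
    for cs v using cm2[of cs, THEN conjunct2, THEN conjunct2, THEN conjunct2] by blast
  have wfo: "\<forall>cl\<in>set po. case cl of (f, ls, s) \<Rightarrow>
        f \<in> Do \<and> funs s \<subseteq> Do \<and>
        distinct (concat (map pvars ls)) \<and>
        fvars s \<subseteq> set (concat (map pvars ls)) \<and>
        (\<exists>K. clause_typable S \<Sigma> FTo K cl) \<and>
        cons_free cl"
    "\<forall>cl1\<in>set po. \<forall>cl2\<in>set po. fst cl1 = fst cl2 \<longrightarrow>
        length (fst (snd cl1)) = length (fst (snd cl2))"
    using cm1(8) unfolding wf_prog_def by (rule conjunct1, rule conjunct2)
  define Nm where "Nm = fst ` set po \<union> (\<Union>cl\<in>set po. funs (snd (snd cl))) \<union> {sd, pd, zd}"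
  have finNm: "finite Nm" using finite_funs by (auto simp: Nm_def)
  define L where "L = Max (length ` Nm)"
  define pre where "pre = replicate (Suc L) CHR ''a''"
  have fresh: "x \<notin> Nm" if x: "x \<in> newnames pre" for x
  proof
    assume "x \<in> Nm"
    then have "length x \<le> L" unfolding L_def using finNm by auto
    moreover have "length x > L" using x by (auto simp: newnames_def pre_def nEQ_def nEN_def nBIT_def
        nLZ_def nNB_def nP2_def nPR_def nSD_def nZR_def)
    ultimately show False by simp
  qed
  define pn where "pn = newprog pre sd pd zd"
  define p where "p = po @ pn"
  have Bad: "fst ` set pn = newnames pre" by (simp add: pn_def newprog_names)
  have heads_fresh: "\<forall>cl\<in>set po. fst cl \<notin> newnames pre" using fresh by (auto simp: Nm_def)
  have funs_fresh: "\<forall>cl\<in>set po. funs (snd (snd cl)) \<inter> newnames pre = {}" using fresh by (auto simp: Nm_def)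
  have sdf: "sd \<notin> newnames pre" "pd \<notin> newnames pre" "zd \<notin> newnames pre" using fresh by (auto simp: Nm_def)
  have ok: "okprog po (fst ` set pn)"
    unfolding okprog_def Bad using heads_fresh funs_fresh wfo(1) by fastforce
  have down: "callv po f vs w" if "callv p f vs w" "f \<notin> newnames pre"
      "\<forall>v\<in>set vs. vsyms v \<inter> newnames pre = {}" for f vs w
    using down_prog(2)[OF ok, of f vs w] that unfolding p_def Bad by blast
  have up: "callv p f vs w" if "callv po f vs w" for f vs w
    using lift_prog(2)[OF that] unfolding p_def .
  have Ao_safe: "vsyms v \<inter> newnames pre = {}" if "v \<in> Ao n" for v n
    using cm1(9) that vtyped_vsyms heads_fresh by blast
  have dpn: "distinct (map fst pn)" using newnames_distinct by (simp add: pn_def)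
  have uni: "uniform p"
    unfolding uniform_def
  proof (intro ballI impI)
    fix cl1 cl2 assume h: "cl1 \<in> set p" "cl2 \<in> set p" "fst cl1 = fst cl2"
    show "length (fst (snd cl1)) = length (fst (snd cl2))"
    proof (cases "cl1 \<in> set po")
      case True
      show ?thesis
      proof (cases "cl2 \<in> set po")
        case True then show ?thesis using \<open>cl1 \<in> set po\<close> wfo(2) h(3) by blast
      next
        case False
        then have "cl2 \<in> set pn" using h(2) by (simp add: p_def)
        then have "fst cl2 \<in> newnames pre" using Bad by blast
        then show ?thesis using heads_fresh True h(3) by auto
      qed
    next
      case False
      then have c1: "cl1 \<in> set pn" using h(1) by (simp add: p_def)
      then have f1: "fst cl1 \<in> newnames pre" using Bad by blast
      have "cl2 \<in> set pn" using h(2) heads_fresh f1 h(3) by (auto simp: p_def)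
      then show ?thesis using distinct_fst_eq[OF dpn c1 _ h(3)] by simp
    qed
  qed
  have newin: "\<forall>cl\<in>set (newprog pre sd pd zd). cl \<in> set p \<and> (\<forall>cl'\<in>set p. fst cl' = fst cl \<longrightarrow> cl' = cl)"
  proof (intro ballI conjI impI)
    fix cl assume c: "cl \<in> set (newprog pre sd pd zd)"
    then show "cl \<in> set p" by (simp add: p_def pn_def)
    fix cl' assume c': "cl' \<in> set p" "fst cl' = fst cl"
    have f: "fst cl \<in> newnames pre" using c Bad pn_def by blast
    then have "cl' \<in> set pn" using c' heads_fresh by (auto simp: p_def)
    then show "cl' = cl" using distinct_fst_eq[OF dpn _ _ c'(2)] c pn_def by simp
  qed
  have blist_safe: "\<forall>v\<in>set [blist cs]. vsyms v \<inter> newnames pre = {}" for cs by simp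
  have A_seed: "\<forall>cs v. callv p sd [blist cs] v \<longrightarrow> v \<in> Ao (length cs) \<and> Io (length cs) v = P (length cs) - 1"
    using down[OF _ sdf(1) blist_safe] cmB by blast
  have A_seed_ex: "\<forall>cs. \<exists>v. callv p sd [blist cs] v"
    using up cmA by blast
  have A_pred: "\<forall>cs. \<forall>v\<in>Ao (length cs). 0 < Io (length cs) v \<longrightarrow>
         (\<exists>w. callv p pd [blist cs, v] w) \<and>
         (\<forall>w. callv p pd [blist cs, v] w \<longrightarrow> w \<in> Ao (length cs) \<and> Io (length cs) w = Io (length cs) v - 1)"
  proof (intro allI ballI impI conjI)
    fix cs :: "bool list" and v assume v: "v \<in> Ao (length cs)" "0 < Io (length cs) v"
    then show "\<exists>w. callv p pd [blist cs, v] w" using up cmC by blast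
    fix w assume w: "callv p pd [blist cs, v] w"
    have "callv po pd [blist cs, v] w" using down[OF w sdf(2)] Ao_safe[OF v(1)] by simp
    then show "w \<in> Ao (length cs)" "Io (length cs) w = Io (length cs) v - 1" using cmC[OF v] by blast+
  qed
  have A_zero: "\<forall>cs. \<forall>v\<in>Ao (length cs).
         (callv p zd [blist cs, v] (VCon CTrue []) \<longleftrightarrow> Io (length cs) v = 0) \<and>
         (callv p zd [blist cs, v] (VCon CFalse []) \<longleftrightarrow> 0 < Io (length cs) v)"
  proof (intro allI ballI)
    fix cs :: "bool list" and v assume v: "v \<in> Ao (length cs)"
    have "callv p zd [blist cs, v] w \<longleftrightarrow> callv po zd [blist cs, v] w" for w
      using down[OF _ sdf(3)] Ao_safe[OF v] up by auto
    then show "(callv p zd [blist cs, v] (VCon CTrue []) \<longleftrightarrow> Io (length cs) v = 0) \<and>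
         (callv p zd [blist cs, v] (VCon CFalse []) \<longleftrightarrow> 0 < Io (length cs) v)"
      using cmD[OF v] by blast
  qed
  interpret X: sem p pre sd pd zd Ao Io P
    using uni newin A_seed A_seed_ex A_pred A_zero by (unfold_locales) blast+
  have orda: "ord a \<le> 1"
  proof -
    obtain s0 where s0: "callv po sd [blist []] s0" using cmA[of "[]"] by blast
    then have s0A: "s0 \<in> Ao 0" using cmB[of "[]"] by simp
    then obtain bb where "callv po zd [blist [], s0] (VCon bb [])"
      using cmD[of s0 "[]"] by (cases "Io 0 s0 = 0") auto
    moreover have "\<forall>cl\<in>set po. clause_typable S \<Sigma> FTo K cl"
      using dord by (simp add: data_order_def FTo_def po_def)
    ultimately have "ord a \<le> K" using ord_alpha cm1(7) by blast
    then show ?thesis using K by simp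
  qed

  define R where "R = TArr tB a"
  define FT' where "FT' = newFT pre a FTo"
  define D' where "D' = Do \<union> newnames pre"
  define A' where "A' = (\<lambda>n. {v. vtyped \<Sigma> FT' p v R \<and> vsyms v \<subseteq> D' \<and>
        (\<exists>k. k < 2 ^ (P n - 1) \<and> rep p (Ao n) (Io n) (P n - 1) v k)})"
  define I' where "I' = (\<lambda>n v. THE k. k < 2 ^ (P n - 1) \<and> rep p (Ao n) (Io n) (P n - 1) v k)"
  define M' where "M' = \<lparr>alpha = R, dsyms = D', ftype = FT', seed = nSD pre, pred = nPR pre,
      zero = nZR pre, avals = A', interp = I', prog = p\<rparr>"
  have I'_eq: "I' n v = k" if "rep p (Ao n) (Io n) (P n - 1) v k" "k < 2 ^ (P n - 1)" for n v k
    unfolding I'_def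
  proof (rule the_equality)
    show "k < 2 ^ (P n - 1) \<and> rep p (Ao n) (Io n) (P n - 1) v k" using that by simp
    fix k' assume "k' < 2 ^ (P n - 1) \<and> rep p (Ao n) (Io n) (P n - 1) v k'"
    then show "k' = k" using rep_unique that by blast
  qed
  have ftv: "FT' (nSD pre) = TArr tL R" "FT' (nPR pre) = TArr tL (TArr R R)" "FT' (nZR pre) = TArr tL (TArr R tB)"
    by (simp_all add: FT'_def R_def newFT_vals)
  have ft_old: "FT' g = FTo g" if "g \<notin> newnames pre" for g
    using that by (simp add: FT'_def newFT_old)
  have old_typ: "clause_typable S \<Sigma> FT' K' cl" if "cl \<in> set po" "clause_typable S \<Sigma> FTo K' cl" for cl K'
  proof (rule clause_typable_FT[OF that(2)])
    show "\<forall>g\<in>funs (lhs_expr (fst cl) (fst (snd cl))) \<union> funs (snd (snd cl)). FT' g = FTo g"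
    proof
      fix g assume g: "g \<in> funs (lhs_expr (fst cl) (fst (snd cl))) \<union> funs (snd (snd cl))"
      have "g \<notin> newnames pre"
      proof (cases "g = fst cl")
        case True then show ?thesis using heads_fresh that(1) by blast
      next
        case False
        then have "g \<in> funs (snd (snd cl))" using g by (simp add: funs_lhs)
        then show ?thesis using funs_fresh that(1) by blast
      qed
      then show "FT' g = FTo g" by (rule ft_old)
    qed
  qed
  have new_typ: "clause_typable S \<Sigma> FT' 1 cl" if "cl \<in> set pn" for cl
  proof -
    have cn: "cl \<in> set (newprog pre sd pd zd)" using that by (simp add: pn_def)
    have ex: "\<exists>t. typed \<Sigma> FT' (G0 a) (lhs_expr (fst cl) (fst (snd cl))) t
            \<and> typed \<Sigma> FT' (G0 a) (snd (snd cl)) t"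
      unfolding FT'_def by (rule bspec[OF new_typed[OF sdf cm1(5,6,7), of \<Sigma>] cn])
    then obtain t where t: "typed \<Sigma> FT' (G0 a) (lhs_expr (fst cl) (fst (snd cl))) t"
        "typed \<Sigma> FT' (G0 a) (snd (snd cl)) t" by (elim exE conjE)
    have g: "\<forall>x. ty_over S (G0 a x) \<and> ord (G0 a x) \<le> 1" using G0_ok[OF cm1(3) orda wfs] by blast
    obtain f ls s where cl: "cl = (f, ls, s)" by (cases cl)
    have t': "typed \<Sigma> FT' (G0 a) (lhs_expr f ls) t" "typed \<Sigma> FT' (G0 a) s t"
      using t unfolding cl fst_conv snd_conv .
    have g': "\<forall>x\<in>set (concat (map pvars ls)). ty_over S (G0 a x) \<and> ord (G0 a x) \<le> 1" using g by blast
    show ?thesis unfolding clause_typable_def cl prod.case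
      by (rule exI[of _ "G0 a"], rule exI[of _ t]) (intro conjI g' t')
  qed
  have newprops: "\<forall>cl\<in>set pn. distinct (concat (map pvars (fst (snd cl)))) \<and>
      fvars (snd (snd cl)) \<subseteq> set (concat (map pvars (fst (snd cl)))) \<and>
      funs (snd (snd cl)) \<subseteq> newnames pre \<union> {sd, pd, zd} \<and> cons_free cl"
    using new_clause_props unfolding pn_def by blast
  have wfp: "wf_prog S \<Sigma> FT' D' p"
    unfolding wf_prog_def
  proof (rule conjI, rule ballI)
    fix cl assume c: "cl \<in> set p"
    obtain f ls s where cl: "cl = (f, ls, s)" by (cases cl)
    show "case cl of (f, ls, s) \<Rightarrow> f \<in> D' \<and> funs s \<subseteq> D' \<and> distinct (concat (map pvars ls)) \<and>
        fvars s \<subseteq> set (concat (map pvars ls)) \<and> (\<exists>K. clause_typable S \<Sigma> FT' K cl) \<and> cons_free cl"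
    proof (cases "cl \<in> set po")
      case True
      then have h: "f \<in> Do \<and> funs s \<subseteq> Do \<and> distinct (concat (map pvars ls)) \<and>
        fvars s \<subseteq> set (concat (map pvars ls)) \<and> (\<exists>K. clause_typable S \<Sigma> FTo K cl) \<and> cons_free cl"
        using wfo(1) cl by fastforce
      then obtain K' where "clause_typable S \<Sigma> FTo K' cl" by blast
      then have "clause_typable S \<Sigma> FT' K' cl" using old_typ True by blast
      then show ?thesis using h cl by (auto simp: D'_def)
    next
      case False
      then have cn: "cl \<in> set pn" using c by (simp add: p_def)
      have fn: "f \<in> newnames pre" using cn cl Bad by force
      have np: "distinct (concat (map pvars ls)) \<and> fvars s \<subseteq> set (concat (map pvars ls)) \<and>
          funs s \<subseteq> newnames pre \<union> {sd, pd, zd} \<and> cons_free (f, ls, s)"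
        using bspec[OF newprops cn] unfolding cl fst_conv snd_conv .
      have fD: "funs s \<subseteq> D'" using np cm1(2) by (auto simp: D'_def)
      have fD': "f \<in> D'" using fn by (simp add: D'_def)
      have ty: "\<exists>K. clause_typable S \<Sigma> FT' K (f, ls, s)" using new_typ[OF cn] cl by blast
      show ?thesis using fD fD' np ty cl by (simp only: prod.case)
    qed
  next
    show "\<forall>cl1\<in>set p. \<forall>cl2\<in>set p. fst cl1 = fst cl2 \<longrightarrow> length (fst (snd cl1)) = length (fst (snd cl2))"
      using uni unfolding uniform_def .
  qed
  have dord': "data_order S \<Sigma> FT' 1 p"
    unfolding data_order_def
  proof
    fix cl assume c: "cl \<in> set p"
    show "clause_typable S \<Sigma> FT' 1 cl"
    proof (cases "cl \<in> set po")
      case True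
      then have "clause_typable S \<Sigma> FTo K cl" using dord by (simp add: data_order_def FTo_def po_def)
      then show ?thesis using old_typ[OF True] clause_typable_mono K by blast
    next
      case False then show ?thesis using c new_typ by (simp add: p_def)
    qed
  qed
  have tyR: "ty_over S R" using cm1(3) wfs by (simp add: R_def ty_over_def)
  have tyD: "\<forall>f\<in>D'. ty_over S (FT' f)"
  proof
    fix f assume f: "f \<in> D'"
    show "ty_over S (FT' f)"
    proof (cases "f \<in> newnames pre")
      case True
      then show ?thesis using cm1(3) wfs
        by (auto simp: newnames_def FT'_def newFT_vals ty_over_def)
    next
      case False then show ?thesis using f cm1(4) ft_old by (simp add: D'_def)
    qed
  qed
  have Aok: "\<forall>n. \<forall>v\<in>A' n. vtyped \<Sigma> FT' p v R \<and> vsyms v \<subseteq> D'" by (simp add: A'_def)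
  have arSD: "arity p (nSD pre) = 2" using X.callv_new(1)[OF X.cl_SD] by simp
  have arPR: "arity p (nPR pre) = 3" using X.callv_new(1)[OF X.cl_PR] by simp
  have percs: "(\<exists>!v. callv p (nSD pre) [blist cs] v) \<and>
      (\<forall>v. callv p (nSD pre) [blist cs] v \<longrightarrow> v \<in> A' (length cs) \<and> I' (length cs) v = 2 ^ (P (length cs) - 1) - 1) \<and>
      (\<forall>v\<in>A' (length cs). I' (length cs) v > 0 \<longrightarrow>
         (\<exists>!w. callv p (nPR pre) [blist cs, v] w) \<and>
         (\<forall>w. callv p (nPR pre) [blist cs, v] w \<longrightarrow> w \<in> A' (length cs) \<and> I' (length cs) w = I' (length cs) v - 1)) \<and>
      (\<forall>v\<in>A' (length cs).
         (callv p (nZR pre) [blist cs, v] (VCon CTrue []) \<longleftrightarrow> I' (length cs) v = 0) \<and>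
         (callv p (nZR pre) [blist cs, v] (VCon CFalse []) \<longleftrightarrow> I' (length cs) v > 0))" for cs
  proof (intro conjI allI impI ballI)
    let ?n = "length cs" and ?c = "blist cs"
    have sdc: "callv p (nSD pre) [?c] v \<longleftrightarrow> v = VFun (nSD pre) [?c]" for v
      using X.callv_new(2)[OF X.cl_SD, of "[?c]" v] by simp
    show "\<exists>!v. callv p (nSD pre) [?c] v" unfolding sdc by simp
    fix v assume v: "callv p (nSD pre) [?c] v"
    then have vv: "v = VFun (nSD pre) [?c]" unfolding sdc .
    have vt: "vtyped \<Sigma> FT' p v R"
      unfolding vv by (rule vtyped.V_Fun[where tys = "[tL]"]) (simp_all add: arSD ftv vtyped_blist)
    have r: "rep p (Ao ?n) (Io ?n) (P ?n - 1) v (2 ^ (P ?n - 1) - 1)" using X.SD_rep[of cs] vv by simp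
    have lt: "(2::nat) ^ (P ?n - 1) - 1 < 2 ^ (P ?n - 1)" by simp
    have vs: "vsyms v \<subseteq> D'" using vv by (simp add: D'_def newnames_def)
    show "v \<in> A' ?n" unfolding A'_def mem_Collect_eq using vt vs r lt by blast
    show "I' ?n v = 2 ^ (P ?n - 1) - 1" using I'_eq[OF r lt] .
  next
    let ?n = "length cs" and ?c = "blist cs"
    fix v assume v: "v \<in> A' ?n" "0 < I' ?n v"
    then obtain k where k: "k < 2 ^ (P ?n - 1)" "rep p (Ao ?n) (Io ?n) (P ?n - 1) v k"
      "vtyped \<Sigma> FT' p v R" "vsyms v \<subseteq> D'" using v(1) unfolding A'_def mem_Collect_eq by blast
    have Ik: "I' ?n v = k" using I'_eq[OF k(2) k(1)] .
    have prc: "callv p (nPR pre) [?c, v] w \<longleftrightarrow> w = VFun (nPR pre) [?c, v]" for w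
      using X.callv_new(2)[OF X.cl_PR, of "[?c, v]" w] by simp
    show "\<exists>!w. callv p (nPR pre) [?c, v] w" unfolding prc by simp
    fix w assume w: "callv p (nPR pre) [?c, v] w"
    then have ww: "w = VFun (nPR pre) [?c, v]" unfolding prc .
    have wt: "vtyped \<Sigma> FT' p w R"
      unfolding ww by (rule vtyped.V_Fun[where tys = "[tL, R]"]) (simp_all add: arPR ftv vtyped_blist k(3))
    have kp: "0 < k" using v(2) Ik by simp
    have r: "rep p (Ao ?n) (Io ?n) (P ?n - 1) w (k - 1)" using X.PR_rep[of cs v k] k(2) kp ww by simp
    have lt: "k - 1 < 2 ^ (P ?n - 1)" using k(1) by simp
    have ws: "vsyms w \<subseteq> D'" using ww k(4) by (simp add: D'_def newnames_def)
    show "w \<in> A' ?n" unfolding A'_def mem_Collect_eq using wt ws r lt by blast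
    show "I' ?n w = I' ?n v - 1" using I'_eq[OF r lt] Ik by simp
  next
    let ?n = "length cs" and ?c = "blist cs"
    fix v assume v: "v \<in> A' ?n"
    then obtain k where k: "k < 2 ^ (P ?n - 1)" "rep p (Ao ?n) (Io ?n) (P ?n - 1) v k"
      unfolding A'_def mem_Collect_eq by blast
    have Ik: "I' ?n v = k" using I'_eq[OF k(2) k(1)] .
    have z: "callv p (nZR pre) [?c, v] w \<longleftrightarrow> w = bv (k = 0)" for w using X.ZR_sem[OF k(2) k(1)] .
    show "callv p (nZR pre) [?c, v] (VCon CTrue []) \<longleftrightarrow> I' ?n v = 0" using z Ik by simp
    show "callv p (nZR pre) [?c, v] (VCon CFalse []) \<longleftrightarrow> 0 < I' ?n v" using z Ik by auto
  qed
  have cmM': "counting_module S \<Sigma> (\<lambda>n. 2 ^ (P n - 1)) M'"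
    unfolding counting_module_def Let_def M'_def cmodule.select_convs
    apply (intro conjI)
    subgoal by (simp add: nSD_def nPR_def nZR_def)
    subgoal by (simp add: D'_def newnames_def)
    subgoal by (rule tyR)
    subgoal by (rule tyD)
    subgoal by (rule ftv(1))
    subgoal by (rule ftv(2))
    subgoal by (rule ftv(3))
    subgoal by (rule wfp)
    subgoal by (rule Aok)
    subgoal by (intro allI) (rule percs)
    done
  have "counting_module S \<Sigma> (\<lambda>n. 2 ^ (P n - 1)) M' \<and> data_order S \<Sigma> (ftype M') 1 (prog M')"
    using cmM' dord' by (simp add: M'_def)
  then show ?thesis by blast
qed


end
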